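(* Let $n=a^2b$ with $a,b$ positive integers, $b>1$ square-free. Let $g\in C(-4n)$ be a class derived from the identity class $e_{-4b}=[(1,0,b)]\in C(-4b)$. Let $r$ be an odd positive integer with $\gcd(r,a)=1$, and let $h\in C(-4nr^2)$ be any class derived from $g$. Then the class $l=h^{\varphi_{-4n}(r)}$ is derived from the identity class $[(1,0,b)]\in C(-4b)$ and also from the identity class $[(1,0,br^2)]\in C(-4br^2)$.
   Context: A binary quadratic form $(a,b,c)$ means $ax^2+bxy+cy^2$ with integer coefficients and discriminant $b^2-4ac$; primitive means $\gcd(a,b,c)=1$. Equivalence of forms is via substitutions in $SL_2(\mathbb Z)$. For $\Delta<0$, $C(\Delta)$ is the class group of equivalence classes of primitive positive definite forms of discriminant $\Delta$ under composition; its identity for $\Delta=-4m$ is the class of $(1,0,m)$. For a positive integer $s$, a class $f\in C(\Delta s^2)$ is derived from a class $g\in C(\Delta)$ if there exist a representative $g_0$ of $g$ and an integer matrix $\begin{pmatrix}\alpha&\beta\\ \gamma&\delta\end{pmatrix}$ of determinant $s$ such that the form $g_0(\alpha x+\beta y,\gamma x+\delta y)$ lies in the class $f$. For an odd positive integer $r=\prod_i p_i^{e_i}$ and discriminant $\Delta$, $\varphi_\Delta(r)=\prod_i p_i^{e_i-1}\bigl(p_i-\left(\frac{\Delta}{p_i}\right)\bigr)$, where $\left(\frac{\Delta}{p}\right)$ is the Kronecker symbol. *)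

theory Defs
  imports "HOL-Number_Theory.Number_Theory" "HOL-Computational_Algebra.Squarefree"
begin

type_synonym qform = "int \<times> int \<times> int"

definition disc :: "qform \<Rightarrow> int" where
  "disc f = (case f of (a, b, c) \<Rightarrow> b^2 - 4*a*c)"

definition primitive :: "qform \<Rightarrow> bool" where
  "primitive f = (case f of (a, b, c) \<Rightarrow> gcd a (gcd b c) = 1)"

definition pos_def :: "qform \<Rightarrow> bool" where
  "pos_def f = (case f of (a, b, c) \<Rightarrow> a > 0 \<and> b^2 - 4*a*c < 0)"

text \<open>The form f(alpha x + beta y, gamma x + delta y).\<close>
definition subst :: "qform \<Rightarrow> int \<Rightarrow> int \<Rightarrow> int \<Rightarrow> int \<Rightarrow> qform" where
  "subst f \<alpha> \<beta> \<gamma> \<delta> = (case f of (a, b, c) \<Rightarrow>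
     (a*\<alpha>^2 + b*\<alpha>*\<gamma> + c*\<gamma>^2,
      2*a*\<alpha>*\<beta> + b*(\<alpha>*\<delta> + \<beta>*\<gamma>) + 2*c*\<gamma>*\<delta>,
      a*\<beta>^2 + b*\<beta>*\<delta> + c*\<delta>^2))"

definition qclass :: "qform \<Rightarrow> qform set" where
  "qclass f = {g. \<exists>\<alpha> \<beta> \<gamma> \<delta>. \<alpha>*\<delta> - \<beta>*\<gamma> = 1 \<and> g = subst f \<alpha> \<beta> \<gamma> \<delta>}"

definition classgroup :: "int \<Rightarrow> qform set set" where
  "classgroup D = {qclass f | f. primitive f \<and> pos_def f \<and> disc f = D}"

definition principal_form :: "int \<Rightarrow> qform" where
  "principal_form D = (if even D then (1, 0, - D div 4) else (1, 1, (1 - D) div 4))"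

definition one_class :: "int \<Rightarrow> qform set" where
  "one_class D = qclass (principal_form D)"

definition dirichlet_comp :: "qform \<Rightarrow> qform \<Rightarrow> qform \<Rightarrow> bool" where
  "dirichlet_comp f g F = (case f of (a1, b1, c1) \<Rightarrow> case g of (a2, b2, c2) \<Rightarrow>
     case F of (A, B, C) \<Rightarrow>
       disc f = disc g \<and> a1 > 0 \<and> a2 > 0 \<and>
       gcd a1 (gcd a2 ((b1 + b2) div 2)) = 1 \<and>
       A = a1 * a2 \<and> [B = b1] (mod 2*a1) \<and> [B = b2] (mod 2*a2) \<and>
       B^2 - 4*A*C = disc f)"

text \<open>Composition of classes (well defined by the classical theory).\<close>
definition cmul :: "qform set \<Rightarrow> qform set \<Rightarrow> qform set" where
  "cmul X Y = (SOME Z. \<exists>f\<in>X. \<exists>g\<in>Y. \<exists>F. dirichlet_comp f g F \<and> Z = qclass F)"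

fun cpow :: "int \<Rightarrow> qform set \<Rightarrow> nat \<Rightarrow> qform set" where
  "cpow D X 0 = one_class D"
| "cpow D X (Suc k) = cmul X (cpow D X k)"

definition derived_from :: "qform set \<Rightarrow> qform set \<Rightarrow> int \<Rightarrow> bool" where
  "derived_from f g s = (\<exists>g0\<in>g. \<exists>\<alpha> \<beta> \<gamma> \<delta>. \<alpha>*\<delta> - \<beta>*\<gamma> = s \<and> subst g0 \<alpha> \<beta> \<gamma> \<delta> \<in> f)"

text \<open>phi_D(r) for odd positive r; for odd primes the Kronecker symbol is the Legendre symbol.\<close>
definition phiD :: "int \<Rightarrow> int \<Rightarrow> int" where
  "phiD D r = (\<Prod>p\<in>prime_factors r. p ^ (multiplicity p r - 1) * (p - Legendre D p))"

end

theory Submission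
  imports Defs Complex_Main
begin

lemma subst_comp:
  "subst (subst f a1 b1 c1 d1) a2 b2 c2 d2 =
   subst f (a1*a2 + b1*c2) (a1*b2 + b1*d2) (c1*a2 + d1*c2) (c1*b2 + d1*d2)"
  by (cases f) (simp add: subst_def algebra_simps power2_eq_square)

lemma subst_id: "subst f 1 0 0 1 = f"
  by (cases f) (simp add: subst_def)

lemma det_mult: "(a1*a2 + b1*c2) * (c1*b2 + d1*d2) - (a1*b2 + b1*d2) * (c1*a2 + d1*c2)
   = (a1*d1 - b1*c1) * (a2*d2 - b2*(c2::int))"
  by (simp add: algebra_simps)

lemma qclass_refl: "f \<in> qclass f"
  unfolding qclass_def mem_Collect_eq
  by (rule exI[of _ 1], rule exI[of _ 0], rule exI[of _ 0], rule exI[of _ 1]) (simp add: subst_id)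

lemma qclass_trans: "g \<in> qclass f \<Longrightarrow> k \<in> qclass g \<Longrightarrow> k \<in> qclass f"
proof -
  assume "g \<in> qclass f" "k \<in> qclass g"
  then obtain a1 b1 c1 d1 a2 b2 c2 d2 where 1: "a1*d1-b1*c1 = 1" "g = subst f a1 b1 c1 d1"
    and 2: "a2*d2-b2*c2 = 1" "k = subst g a2 b2 c2 d2"
    unfolding qclass_def by blast
  have "k = subst f (a1*a2 + b1*c2) (a1*b2 + b1*d2) (c1*a2 + d1*c2) (c1*b2 + d1*d2)"
    using 1 2 subst_comp by simp
  moreover have "(a1*a2 + b1*c2) * (c1*b2 + d1*d2) - (a1*b2 + b1*d2) * (c1*a2 + d1*c2) = 1"
    using det_mult 1 2 by simp
  ultimately show ?thesis unfolding qclass_def by blast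
qed

lemma qclass_sym: "g \<in> qclass f \<Longrightarrow> f \<in> qclass g"
proof -
  assume "g \<in> qclass f"
  then obtain a b c d where 1: "a*d-b*c = 1" "g = subst f a b c d"
    unfolding qclass_def by blast
  have "subst g d (-b) (-c) a = subst f (a*d - b*c) (a*(-b) + b*a) (c*d - d*c) (c*(-b) + d*a)"
    using 1 subst_comp by simp
  also have "\<dots> = f" using 1 subst_id by (simp add: algebra_simps)
  finally have "f = subst g d (-b) (-c) a" by simp
  moreover have "d*a - (-b)*(-c) = 1" using 1 by (simp add: algebra_simps)
  ultimately show ?thesis unfolding qclass_def by blast
qed

lemma qclass_eq: "g \<in> qclass f \<Longrightarrow> qclass g = qclass f"
  using qclass_trans qclass_sym by blast

lemma disc_subst: "disc (subst f a b c d) = (a*d - b*c)^2 * disc f"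
  by (cases f) (simp add: disc_def subst_def power2_eq_square algebra_simps)

lemma subst_mem: "a*d - b*c = 1 \<Longrightarrow> subst f a b c d \<in> qclass f"
  unfolding qclass_def by blast

definition th :: "int \<Rightarrow> complex" where
  "th n = \<i> * complex_of_real (sqrt (real_of_int n))"

lemma th_sq: "n \<ge> 0 \<Longrightarrow> (th n)^2 = - of_int n"
  by (simp add: th_def power_mult_distrib flip: of_real_power)

lemma Re_th[simp]: "Re (th n) = 0" by (simp add: th_def)
lemma Im_th[simp]: "Im (th n) = sqrt (real_of_int n)" by (simp add: th_def)
lemma cnj_th[simp]: "cnj (th n) = - th n" by (simp add: th_def)

definition lat :: "complex \<Rightarrow> complex \<Rightarrow> complex set" where
  "lat a b = {of_int x * a + of_int y * b | x y. True}"

definition lmul :: "complex set \<Rightarrow> complex set \<Rightarrow> complex set" where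
  "lmul S T = {s1*t1 + s2*t2 | s1 t1 s2 t2. s1 \<in> S \<and> t1 \<in> T \<and> s2 \<in> S \<and> t2 \<in> T}"

definition Lq :: "int \<Rightarrow> qform \<Rightarrow> complex set" where
  "Lq n q = (case q of (A,B,C) \<Rightarrow> lat (of_int A) (of_int (B div 2) + th n))"

lemma lat_scale: "lat (l*a) (l*b) = (\<lambda>z. l*z) ` lat a b"
proof
  show "lat (l*a) (l*b) \<subseteq> (\<lambda>z. l*z) ` lat a b"
  proof
    fix z assume "z \<in> lat (l*a) (l*b)"
    then obtain x y where "z = of_int x * (l*a) + of_int y * (l*b)" unfolding lat_def by blast
    then have "z = l * (of_int x * a + of_int y * b)" by (simp add: algebra_simps)
    then show "z \<in> (\<lambda>z. l*z) ` lat a b" unfolding lat_def by blast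
  qed
next
  show "(\<lambda>z. l*z) ` lat a b \<subseteq> lat (l*a) (l*b)"
  proof
    fix z assume "z \<in> (\<lambda>z. l*z) ` lat a b"
    then obtain x y where "z = l * (of_int x * a + of_int y * b)" unfolding lat_def by blast
    then have "z = of_int x * (l*a) + of_int y * (l*b)" by (simp add: algebra_simps)
    then show "z \<in> lat (l*a) (l*b)" unfolding lat_def by blast
  qed
qed

lemma lat_unimod:
  assumes "\<alpha>*\<delta> - \<beta>*\<gamma> = (1::int)"
  shows "lat (of_int \<alpha>*a + of_int \<gamma>*b) (of_int \<beta>*a + of_int \<delta>*b) = lat a b"
proof
  show "lat (of_int \<alpha>*a + of_int \<gamma>*b) (of_int \<beta>*a + of_int \<delta>*b) \<subseteq> lat a b"
  proof
    fix z assume "z \<in> lat (of_int \<alpha>*a + of_int \<gamma>*b) (of_int \<beta>*a + of_int \<delta>*b)"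
    then obtain x y where "z = of_int x * (of_int \<alpha>*a + of_int \<gamma>*b) + of_int y * (of_int \<beta>*a + of_int \<delta>*b)"
      unfolding lat_def by blast
    then have "z = of_int (x*\<alpha>+y*\<beta>) * a + of_int (x*\<gamma>+y*\<delta>) * b"
      by (simp add: algebra_simps)
    then show "z \<in> lat a b" unfolding lat_def by blast
  qed
next
  show "lat a b \<subseteq> lat (of_int \<alpha>*a + of_int \<gamma>*b) (of_int \<beta>*a + of_int \<delta>*b)"
  proof
    fix z assume "z \<in> lat a b"
    then obtain x y where z: "z = of_int x * a + of_int y * b"
      unfolding lat_def by blast
    have e1: "of_int (\<delta>*x - \<beta>*y) * of_int \<alpha> + of_int (-\<gamma>*x+\<alpha>*y) * of_int \<beta> = (of_int x::complex)"
    proof -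
      have "(\<delta>*x - \<beta>*y) * \<alpha> + (-\<gamma>*x+\<alpha>*y) * \<beta> = x * (\<alpha>*\<delta> - \<beta>*\<gamma>)" by (simp add: algebra_simps)
      then have "(\<delta>*x - \<beta>*y) * \<alpha> + (-\<gamma>*x+\<alpha>*y) * \<beta> = x" using assms by simp
      then show ?thesis by (metis of_int_add of_int_mult)
    qed
    have e2: "of_int (\<delta>*x - \<beta>*y) * of_int \<gamma> + of_int (-\<gamma>*x+\<alpha>*y) * of_int \<delta> = (of_int y::complex)"
    proof -
      have "(\<delta>*x - \<beta>*y) * \<gamma> + (-\<gamma>*x+\<alpha>*y) * \<delta> = y * (\<alpha>*\<delta> - \<beta>*\<gamma>)" by (simp add: algebra_simps)
      then have "(\<delta>*x - \<beta>*y) * \<gamma> + (-\<gamma>*x+\<alpha>*y) * \<delta> = y" using assms by simp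
      then show ?thesis by (metis of_int_add of_int_mult)
    qed
    have "z = of_int (\<delta>*x - \<beta>*y) * (of_int \<alpha>*a + of_int \<gamma>*b) + of_int (-\<gamma>*x+\<alpha>*y) * (of_int \<beta>*a + of_int \<delta>*b)"
    proof -
      have "of_int (\<delta>*x - \<beta>*y) * (of_int \<alpha>*a + of_int \<gamma>*b) + of_int (-\<gamma>*x+\<alpha>*y) * (of_int \<beta>*a + of_int \<delta>*b)
        = (of_int (\<delta>*x - \<beta>*y) * of_int \<alpha> + of_int (-\<gamma>*x+\<alpha>*y) * of_int \<beta>) * a
          + (of_int (\<delta>*x - \<beta>*y) * of_int \<gamma> + of_int (-\<gamma>*x+\<alpha>*y) * of_int \<delta>) * b"
        by (simp only: algebra_simps)
      then show ?thesis using e1 e2 z by simp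
    qed
    then show "z \<in> lat (of_int \<alpha>*a + of_int \<gamma>*b) (of_int \<beta>*a + of_int \<delta>*b)"
      unfolding lat_def by blast
  qed
qed

lemma lmul_lat: "lmul (lat a b) (lat c d) =
   {of_int x1*(a*c) + of_int x2*(a*d) + of_int x3*(b*c) + of_int x4*(b*d) | x1 x2 x3 x4. True}"
proof
  show "lmul (lat a b) (lat c d) \<subseteq> {of_int x1*(a*c) + of_int x2*(a*d) + of_int x3*(b*c) + of_int x4*(b*d) | x1 x2 x3 x4. True}"
  proof
    fix z assume "z \<in> lmul (lat a b) (lat c d)"
    then obtain p1 q1 p2 q2 p3 q3 p4 q4 where z: "z = (of_int p1 * a + of_int q1 * b) * (of_int p2 * c + of_int q2 * d)
      + (of_int p3 * a + of_int q3 * b) * (of_int p4 * c + of_int q4 * d)"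
      unfolding lmul_def lat_def by blast
    have "z = of_int (p1*p2+p3*p4)*(a*c) + of_int (p1*q2+p3*q4)*(a*d) + of_int (q1*p2+q3*p4)*(b*c) + of_int (q1*q2+q3*q4)*(b*d)"
      unfolding z by (simp add: algebra_simps)
    then show "z \<in> {of_int x1*(a*c) + of_int x2*(a*d) + of_int x3*(b*c) + of_int x4*(b*d) | x1 x2 x3 x4. True}" by blast
  qed
next
  show "{of_int x1*(a*c) + of_int x2*(a*d) + of_int x3*(b*c) + of_int x4*(b*d) | x1 x2 x3 x4. True} \<subseteq> lmul (lat a b) (lat c d)"
  proof
    fix z assume "z \<in> {of_int x1*(a*c) + of_int x2*(a*d) + of_int x3*(b*c) + of_int x4*(b*d) | x1 x2 x3 x4. True}"
    then obtain x1 x2 x3 x4 where z: "z = of_int x1*(a*c) + of_int x2*(a*d) + of_int x3*(b*c) + of_int x4*(b*d)" by blast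
    have "a \<in> lat a b" unfolding lat_def by (rule CollectI, rule exI[of _ 1], rule exI[of _ 0]) simp
    moreover have "b \<in> lat a b" unfolding lat_def by (rule CollectI, rule exI[of _ 0], rule exI[of _ 1]) simp
    moreover have "of_int x1 * c + of_int x2 * d \<in> lat c d" unfolding lat_def by blast
    moreover have "of_int x3 * c + of_int x4 * d \<in> lat c d" unfolding lat_def by blast
    moreover have "z = a * (of_int x1 * c + of_int x2 * d) + b * (of_int x3 * c + of_int x4 * d)"
      unfolding z by (simp add: algebra_simps)
    ultimately show "z \<in> lmul (lat a b) (lat c d)" unfolding lmul_def by blast
  qed
qed

lemma lmul_scale: "lmul ((\<lambda>z. l*z) ` S) ((\<lambda>z. m*z) ` T) = (\<lambda>z. (l*m)*z) ` lmul S T"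
proof
  show "lmul ((\<lambda>z. l*z) ` S) ((\<lambda>z. m*z) ` T) \<subseteq> (\<lambda>z. (l*m)*z) ` lmul S T"
  proof
    fix z assume "z \<in> lmul ((\<lambda>z. l*z) ` S) ((\<lambda>z. m*z) ` T)"
    then obtain s1 t1 s2 t2 where "s1 \<in> S" "t1 \<in> T" "s2 \<in> S" "t2 \<in> T"
      "z = (l*s1)*(m*t1) + (l*s2)*(m*t2)" unfolding lmul_def by blast
    moreover have "(l*s1)*(m*t1) + (l*s2)*(m*t2) = (l*m)*(s1*t1+s2*t2)" by (simp add: algebra_simps)
    ultimately show "z \<in> (\<lambda>z. (l*m)*z) ` lmul S T" unfolding lmul_def by blast
  qed
next
  show "(\<lambda>z. (l*m)*z) ` lmul S T \<subseteq> lmul ((\<lambda>z. l*z) ` S) ((\<lambda>z. m*z) ` T)"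
  proof
    fix z assume "z \<in> (\<lambda>z. (l*m)*z) ` lmul S T"
    then obtain s1 t1 s2 t2 where "s1 \<in> S" "t1 \<in> T" "s2 \<in> S" "t2 \<in> T"
      "z = (l*m)*(s1*t1+s2*t2)" unfolding lmul_def by blast
    moreover have "(l*s1)*(m*t1) + (l*s2)*(m*t2) = (l*m)*(s1*t1+s2*t2)" by (simp add: algebra_simps)
    moreover have "l*s1 \<in> (\<lambda>z. l*z) ` S" "l*s2 \<in> (\<lambda>z. l*z) ` S" "m*t1 \<in> (\<lambda>z. m*z) ` T" "m*t2 \<in> (\<lambda>z. m*z) ` T"
      using calculation by auto
    ultimately show "z \<in> lmul ((\<lambda>z. l*z) ` S) ((\<lambda>z. m*z) ` T)" unfolding lmul_def by (smt (verit) mem_Collect_eq)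
  qed
qed

lemma ident1:
  assumes "(t::complex)^2 = - n" "B0^2 + n = A * C"
  shows "(x1*A + y1*(B0+t))*(x1*A + y1*(B0-t)) = A*(A*x1^2 + 2*B0*x1*y1 + C*y1^2)"
proof -
  have "(x1*A + y1*(B0+t))*(x1*A + y1*(B0-t)) - A*(A*x1^2 + 2*B0*x1*y1 + C*y1^2)
     = y1^2*(B0^2 + n - A*C) - y1^2*(t^2+n)"
    by (simp add: algebra_simps power2_eq_square)
  then show ?thesis using assms by simp
qed

lemma ident2:
  assumes "(t::complex)^2 = - n" "B0^2 + n = A * C"
  shows "(x1*A + y1*(B0-t))*(x2*A + y2*(B0+t)) = A*((A*x1*x2 + B0*(x1*y2+x2*y1) + C*y1*y2) + (x1*y2-x2*y1)*t)"
proof -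
  have "(x1*A + y1*(B0-t))*(x2*A + y2*(B0+t)) - A*((A*x1*x2 + B0*(x1*y2+x2*y1) + C*y1*y2) + (x1*y2-x2*y1)*t)
     = y1*y2*(B0^2 + n - A*C) - y1*y2*(t^2+n)"
    by (simp add: algebra_simps power2_eq_square)
  then show ?thesis using assms by simp
qed

lemma disc_even:
  assumes "disc (A,B,C) = -4*n" shows "\<exists>B0. B = 2*B0 \<and> B0^2 + n = A*C"
proof -
  have e: "B^2 - 4*A*C = -4*n" using assms by (simp add: disc_def)
  then have "B^2 = 2*(2*A*C - 2*n)" by (simp add: algebra_simps)
  then have "even (B^2)" by simp
  then have "even B" by simp
  then obtain B0 where "B = 2*B0" by blast
  moreover have "B0^2 + n = A*C" using e calculation by (simp add: power2_eq_square algebra_simps)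
  ultimately show ?thesis by blast
qed

lemma lat_mem1: "a \<in> lat a b"
  unfolding lat_def by (rule CollectI, rule exI[of _ 1], rule exI[of _ 0]) simp
lemma lat_mem2: "b \<in> lat a b"
  unfolding lat_def by (rule CollectI, rule exI[of _ 0], rule exI[of _ 1]) simp

lemma equiv_homothety:
  assumes n: "n \<ge> 0" and d: "disc (A,B,C) = -4*n" and A: "A \<noteq> 0"
    and det: "\<alpha>*\<delta> - \<beta>*\<gamma> = 1" and q': "subst (A,B,C) \<alpha> \<beta> \<gamma> \<delta> = (A',B',C')" and A': "A' \<noteq> 0"
  shows "\<exists>l. l \<noteq> 0 \<and> Lq n (A',B',C') = (\<lambda>z. l*z) ` Lq n (A,B,C)"
proof -
  obtain B0 where B: "B = 2*B0" and B0: "B0^2 + n = A*C" using disc_even d by blast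
  have A'e: "A' = A*\<alpha>^2 + 2*B0*\<alpha>*\<gamma> + C*\<gamma>^2" and B'e: "B' = 2*(A*\<alpha>*\<beta> + B0*(\<alpha>*\<delta>+\<beta>*\<gamma>) + C*\<gamma>*\<delta>)"
    using q' B by (auto simp: subst_def algebra_simps power2_eq_square)
  define B0' where "B0' = A*\<alpha>*\<beta> + B0*(\<alpha>*\<delta>+\<beta>*\<gamma>) + C*\<gamma>*\<delta>"
  have B'div: "B' div 2 = B0'" using B'e B0'_def by simp
  define t where "t = th n"
  define \<xi> where "\<xi> = of_int \<alpha> * of_int A + of_int \<gamma> * (of_int B0 + t)"
  define \<xi>c where "\<xi>c = of_int \<alpha> * of_int A + of_int \<gamma> * (of_int B0 - t)"
  define \<eta> where "\<eta> = of_int \<beta> * of_int A + of_int \<delta> * (of_int B0 + t)"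
  have tsq: "t^2 = - of_int n" using th_sq n t_def by simp
  have B0c: "(of_int B0::complex)^2 + of_int n = of_int A * of_int C" using B0
    by (metis of_int_add of_int_mult of_int_power)
  have e1: "\<xi> * \<xi>c = of_int A * of_int A'"
    using ident1[OF tsq B0c, of "of_int \<alpha>" "of_int \<gamma>"] unfolding \<xi>_def \<xi>c_def A'e by simp
  have detc: "(of_int \<alpha> * of_int \<delta> - of_int \<beta> * of_int \<gamma> :: complex) = 1"
    using det by (metis of_int_1 of_int_diff of_int_mult)
  have e2: "\<xi>c * \<eta> = of_int A * (of_int B0' + t)"
    using ident2[OF tsq B0c, of "of_int \<alpha>" "of_int \<gamma>" "of_int \<beta>" "of_int \<delta>"] detc
    unfolding \<xi>_def \<xi>c_def \<eta>_def B0'_def by (simp add: algebra_simps)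
  have \<xi>nz: "\<xi> \<noteq> 0" using e1 A A' by auto
  define l where "l = of_int A' / \<xi>"
  have l1: "l * \<xi> = of_int A'" using \<xi>nz by (simp add: l_def)
  have "\<xi> * (of_int A * (of_int B0' + t)) = \<xi> * \<xi>c * \<eta>" using e2 by (simp add: mult.assoc)
  also have "\<dots> = of_int A * (of_int A' * \<eta>)" using e1 by simp
  finally have "of_int A * (\<xi> * (of_int B0' + t)) = of_int A * (of_int A' * \<eta>)" by (simp add: algebra_simps)
  then have "\<xi> * (of_int B0' + t) = of_int A' * \<eta>" using A by simp
  then have l2: "l * \<eta> = of_int B0' + t" using \<xi>nz unfolding l_def by (simp add: field_simps)
  have "Lq n (A',B',C') = lat (of_int A') (of_int B0' + t)" by (simp add: Lq_def B'div t_def)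
  also have "\<dots> = lat (l*\<xi>) (l*\<eta>)" using l1 l2 by simp
  also have "\<dots> = (\<lambda>z. l*z) ` lat \<xi> \<eta>" by (rule lat_scale)
  also have "lat \<xi> \<eta> = lat (of_int A) (of_int B0 + t)" unfolding \<xi>_def \<eta>_def by (rule lat_unimod[OF det])
  also have "\<dots> = Lq n (A,B,C)" by (simp add: Lq_def B t_def)
  finally have "Lq n (A',B',C') = (\<lambda>z. l*z) ` Lq n (A,B,C)" .
  moreover have "l \<noteq> 0" using l1 A' by auto
  ultimately show ?thesis by blast
qed

lemma lin_indep:
  assumes n: "n > 0" and A: "A \<noteq> 0"
    and e: "of_int x * of_int A + of_int y * (of_int B0 + th n) = of_int x' * of_int A + of_int y' * (of_int B0 + th n)"
  shows "x = x' \<and> y = y'"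
proof -
  have "Im (of_int x * of_int A + of_int y * (of_int B0 + th n)) = Im (of_int x' * of_int A + of_int y' * (of_int B0 + th n))"
    using e by simp
  then have "real_of_int y * sqrt (real_of_int n) = real_of_int y' * sqrt (real_of_int n)" by simp
  moreover have "sqrt (real_of_int n) > 0" using n by simp
  ultimately have y: "y = y'" by simp
  have "Re (of_int x * of_int A + of_int y * (of_int B0 + th n)) = Re (of_int x' * of_int A + of_int y' * (of_int B0 + th n))"
    using e by simp
  then have "real_of_int x * real_of_int A + real_of_int y * real_of_int B0 = real_of_int x' * real_of_int A + real_of_int y' * real_of_int B0" by simp
  then have "real_of_int x * real_of_int A = real_of_int x' * real_of_int A" using y by simp
  then have "x = x'" using A by simp
  with y show ?thesis by simp
qed

lemma homothety_equiv:
  assumes n: "n > 0" and d: "disc (A,B,C) = -4*n" and d': "disc (A',B',C') = -4*n"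
    and A: "A > 0" and A': "A' > 0"
    and L: "Lq n (A',B',C') = (\<lambda>z. l*z) ` Lq n (A,B,C)"
  shows "(A',B',C') \<in> qclass (A,B,C)"
proof -
  obtain B0 where B: "B = 2*B0" and B0: "B0^2 + n = A*C" using disc_even d by blast
  obtain B0' where B': "B' = 2*B0'" and B0': "B0'^2 + n = A'*C'" using disc_even d' by blast
  define t where "t = th n"
  define \<beta> where "\<beta> = of_int B0 + t"
  define \<beta>' where "\<beta>' = of_int B0' + t"
  have LF: "Lq n (A,B,C) = lat (of_int A) \<beta>" by (simp add: Lq_def B \<beta>_def t_def)
  have LF': "Lq n (A',B',C') = lat (of_int A') \<beta>'" by (simp add: Lq_def B' \<beta>'_def t_def)
  have "of_int A' \<in> (\<lambda>z. l*z) ` lat (of_int A) \<beta>" using L LF LF' lat_mem1 by metis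
  then obtain x1 y1 where 1: "of_int A' = l * (of_int x1 * of_int A + of_int y1 * \<beta>)"
    unfolding lat_def by blast
  have "\<beta>' \<in> (\<lambda>z. l*z) ` lat (of_int A) \<beta>" using L LF LF' lat_mem2 by metis
  then obtain x2 y2 where 2: "\<beta>' = l * (of_int x2 * of_int A + of_int y2 * \<beta>)"
    unfolding lat_def by blast
  have lnz: "l \<noteq> 0" using 1 A' by auto
  have "l * of_int A \<in> lat (of_int A') \<beta>'" using L LF LF' lat_mem1 by (metis imageI)
  then obtain x3 y3 where 3: "l * of_int A = of_int x3 * of_int A' + of_int y3 * \<beta>'"
    unfolding lat_def by blast
  have "l * \<beta> \<in> lat (of_int A') \<beta>'" using L LF LF' lat_mem2 by (metis imageI)
  then obtain x4 y4 where 4: "l * \<beta> = of_int x4 * of_int A' + of_int y4 * \<beta>'"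
    unfolding lat_def by blast
  have "l * of_int A = l * (of_int (x3*x1+y3*x2) * of_int A + of_int (x3*y1+y3*y2) * \<beta>)"
    using 3 unfolding 1 2 by (simp add: algebra_simps)
  then have "of_int 1 * of_int A + of_int 0 * (of_int B0 + th n) = of_int (x3*x1+y3*x2) * of_int A + of_int (x3*y1+y3*y2) * (of_int B0 + th n)"
    using lnz unfolding \<beta>_def t_def by simp
  from lin_indep[OF n _ this] A have P12: "x3*x1+y3*x2 = 1" "x3*y1+y3*y2 = 0" by auto
  have "l * \<beta> = l * (of_int (x4*x1+y4*x2) * of_int A + of_int (x4*y1+y4*y2) * \<beta>)"
    using 4 unfolding 1 2 by (simp add: algebra_simps)
  then have "of_int 0 * of_int A + of_int 1 * (of_int B0 + th n) = of_int (x4*x1+y4*x2) * of_int A + of_int (x4*y1+y4*y2) * (of_int B0 + th n)"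
    using lnz unfolding \<beta>_def t_def by simp
  from lin_indep[OF n _ this] A have P34: "x4*x1+y4*x2 = 0" "x4*y1+y4*y2 = 1" by auto
  define dt where "dt = x1*y2 - x2*y1"
  have "dt * (x3*y4 - x4*y3) = (x3*x1+y3*x2)*(x4*y1+y4*y2) - (x4*x1+y4*x2)*(x3*y1+y3*y2)"
    unfolding dt_def by (simp add: algebra_simps)
  then have "dt * (x3*y4 - x4*y3) = 1" using P12 P34 by simp
  then have dt1: "dt = 1 \<or> dt = -1" using pos_zmult_eq_1_iff_lemma by blast
  define \<xi> where "\<xi> = of_int x1 * of_int A + of_int y1 * \<beta>"
  define \<xi>c where "\<xi>c = of_int x1 * of_int A + of_int y1 * (of_int B0 - t)"
  define \<eta> where "\<eta> = of_int x2 * of_int A + of_int y2 * \<beta>"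
  have tsq: "t^2 = - of_int n" using th_sq n t_def by simp
  have B0c: "(of_int B0::complex)^2 + of_int n = of_int A * of_int C" using B0
    by (metis of_int_add of_int_mult of_int_power)
  define A1 where "A1 = A*x1^2 + 2*B0*x1*y1 + C*y1^2"
  define B1 where "B1 = A*x1*x2 + B0*(x1*y2+x2*y1) + C*y1*y2"
  define C1 where "C1 = A*x2^2 + 2*B0*x2*y2 + C*y2^2"
  have e1: "\<xi> * \<xi>c = of_int A * of_int A1"
    using ident1[OF tsq B0c, of "of_int x1" "of_int y1"] unfolding \<xi>_def \<xi>c_def A1_def \<beta>_def by simp
  have e2: "\<xi>c * \<eta> = of_int A * (of_int B1 + of_int dt * t)"
    using ident2[OF tsq B0c, of "of_int x1" "of_int y1" "of_int x2" "of_int y2"]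
    unfolding \<xi>_def \<xi>c_def \<eta>_def B1_def dt_def \<beta>_def by simp
  have cx: "cnj \<xi> = \<xi>c" unfolding \<xi>_def \<xi>c_def \<beta>_def t_def by simp
  have a1: "of_int A' = l * \<xi>" using 1 \<xi>_def by simp
  have a1c: "of_int A' = cnj l * \<xi>c" using arg_cong[OF a1, of cnj] cx by simp
  have b2: "\<beta>' = l * \<eta>" using 2 \<eta>_def by simp
  define k where "k = (Re l)^2 + (Im l)^2"
  have kc: "cnj l * l = of_real k" using complex_mult_cnj[of l] unfolding k_def by (simp add: mult.commute)
  have "k = (cmod l)^2" unfolding k_def by (simp add: cmod_power2)
  then have kpos: "k > 0" using lnz by simp
  have E1: "of_int A' * \<beta>' = of_real k * (of_int A * (of_int B1 + of_int dt * t))"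
  proof -
    have "of_int A' * \<beta>' = (cnj l * l) * (\<xi>c * \<eta>)" using a1c b2 by (simp add: algebra_simps)
    then show ?thesis using kc e2 by simp
  qed
  have E2: "(of_int A' * of_int A' :: complex) = of_real k * (of_int A * of_int A1)"
  proof -
    have "of_int A' * of_int A' = (cnj l * l) * (\<xi> * \<xi>c)" using a1c a1 by (simp add: algebra_simps)
    then show ?thesis using kc e1 by simp
  qed
  have "Im (of_int A' * \<beta>') = Im (of_real k * (of_int A * (of_int B1 + of_int dt * t)))" using E1 by simp
  then have "real_of_int A' * sqrt (real_of_int n) = k * real_of_int A * real_of_int dt * sqrt (real_of_int n)"
    unfolding \<beta>'_def t_def by (simp add: mult.assoc)
  moreover have "sqrt (real_of_int n) > 0" using n by simp
  ultimately have i1: "real_of_int A' = k * real_of_int A * real_of_int dt" by (simp add: mult.assoc)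
  have "dt = 1"
  proof (rule ccontr)
    assume "dt \<noteq> 1" then have "dt = -1" using dt1 by simp
    then have "real_of_int A' = - (k * real_of_int A)" using i1 by simp
    moreover have "k * real_of_int A > 0" using kpos A by simp
    ultimately show False using A' by simp
  qed
  then have i1': "real_of_int A' = k * real_of_int A" using i1 by simp
  have "Re (of_int A' * \<beta>') = Re (of_real k * (of_int A * (of_int B1 + of_int dt * t)))" using E1 by simp
  then have "real_of_int A' * real_of_int B0' = k * real_of_int A * real_of_int B1"
    unfolding \<beta>'_def t_def by simp
  then have "real_of_int A' * real_of_int B0' = real_of_int A' * real_of_int B1" using i1' by simp
  then have B1e: "B1 = B0'" using A' by simp
  have "Re (of_int A' * of_int A' :: complex) = Re (of_real k * (of_int A * of_int A1))" using E2 by simp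
  then have "real_of_int A' * real_of_int A' = k * real_of_int A * real_of_int A1" by simp
  then have "real_of_int A' * real_of_int A' = real_of_int A' * real_of_int A1" using i1' by simp
  then have A1e: "A1 = A'" using A' by simp
  have sub: "subst (A,B,C) x1 x2 y1 y2 = (A1, 2*B1, C1)"
    unfolding A1_def B1_def C1_def B by (simp add: subst_def algebra_simps power2_eq_square)
  have "disc (subst (A,B,C) x1 x2 y1 y2) = -4*n" using disc_subst[of "(A,B,C)" x1 x2 y1 y2] d \<open>dt = 1\<close>
    unfolding dt_def by simp
  then have "(2*B1)^2 - 4*A1*C1 = -4*n" using sub by (simp add: disc_def)
  moreover have "(2*B0')^2 - 4*A'*C' = -4*n" using d' B' by (simp add: disc_def)
  ultimately have "A'*C1 = A'*C'" using A1e B1e by (simp add: algebra_simps)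
  then have "C1 = C'" using A' by simp
  then have "(A',B',C') = subst (A,B,C) x1 x2 y1 y2" using sub A1e B1e B' by simp
  then show ?thesis using subst_mem[of x1 y2 x2 y1] \<open>dt = 1\<close> unfolding dt_def by simp
qed

lemma ident3:
  assumes "(t::complex)^2 = - n" "E^2 + n = a1*a2*C"
  shows "(E - a1*t1 + t)*(E - a2*t2 + t) = (t1*t2 - C)*(a1*a2) + ((E - a1*t1) + (E - a2*t2))*(E + t)"
proof -
  have "(E - a1*t1 + t)*(E - a2*t2 + t) - ((t1*t2 - C)*(a1*a2) + ((E - a1*t1) + (E - a2*t2))*(E + t))
    = (t^2 + n) - (E^2 + n - a1*a2*C)"
    by (simp add: algebra_simps power2_eq_square)
  then show ?thesis using assms by simp
qed

lemma dirichlet_lat: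
  assumes n: "n \<ge> 0" and dc: "dirichlet_comp (a1,b1,c1) (a2,b2,c2) (A,B,C)"
    and d: "disc (a1,b1,c1) = -4*n"
  shows "Lq n (A,B,C) = lmul (Lq n (a1,b1,c1)) (Lq n (a2,b2,c2))"
proof -
  from dc have dg: "disc (a2,b2,c2) = -4*n" and g: "gcd a1 (gcd a2 ((b1 + b2) div 2)) = 1"
    and Ae: "A = a1*a2" and c1: "[B = b1] (mod 2*a1)" and c2: "[B = b2] (mod 2*a2)"
    and dF: "B^2 - 4*A*C = -4*n"
    using d unfolding dirichlet_comp_def by auto
  have dF': "disc (A,B,C) = -4*n" using dF by (simp add: disc_def)
  obtain e1 where b1: "b1 = 2*e1" using disc_even d by blast
  obtain e2 where b2: "b2 = 2*e2" using disc_even dg by blast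
  obtain E where BE: "B = 2*E" and E: "E^2 + n = A*C" using disc_even dF' by blast
  obtain t1 where t1: "B - b1 = (2*a1)*t1" using c1 unfolding cong_iff_dvd_diff by blast
  obtain t2 where t2: "B - b2 = (2*a2)*t2" using c2 unfolding cong_iff_dvd_diff by blast
  have Et1: "e1 = E - a1*t1" using t1 b1 BE by simp
  have Et2: "e2 = E - a2*t2" using t2 b2 BE by simp
  define e where "e = e1 + e2"
  have ed: "(b1 + b2) div 2 = e" using b1 b2 e_def by simp
  obtain u k where uk: "u*a1 + k*gcd a2 e = 1" using bezout_int[of a1 "gcd a2 e"] g ed by auto
  obtain v' w' where vw: "v'*a2 + w'*e = gcd a2 e" using bezout_int[of a2 e] by auto
  define v where "v = k*v'"
  define w where "w = k*w'"
  have bez: "u*a1 + v*a2 + w*e = 1" using uk vw unfolding v_def w_def by (metis distrib_left mult.assoc add.assoc)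
  define t where "t = th n"
  have tsq: "t^2 = - of_int n" using th_sq n t_def by simp
  define \<beta> where "\<beta> = of_int E + t"
  define \<beta>1 where "\<beta>1 = of_int e1 + t"
  define \<beta>2 where "\<beta>2 = of_int e2 + t"
  have LF: "Lq n (A,B,C) = lat (of_int A) \<beta>" by (simp add: Lq_def BE \<beta>_def t_def)
  have Lf: "Lq n (a1,b1,c1) = lat (of_int a1) \<beta>1" by (simp add: Lq_def b1 \<beta>1_def t_def)
  have Lg: "Lq n (a2,b2,c2) = lat (of_int a2) \<beta>2" by (simp add: Lq_def b2 \<beta>2_def t_def)
  have I0: "of_int a1 * of_int a2 = (of_int A :: complex)" using Ae by simp
  have I1: "of_int a1 * \<beta>2 = of_int (-t2) * of_int A + of_int a1 * \<beta>"
    unfolding \<beta>2_def \<beta>_def Et2 Ae by (simp add: algebra_simps)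
  have I2: "\<beta>1 * of_int a2 = of_int (-t1) * of_int A + of_int a2 * \<beta>"
    unfolding \<beta>1_def \<beta>_def Et1 Ae by (simp add: algebra_simps)
  have Ec: "(of_int E::complex)^2 + of_int n = of_int a1 * of_int a2 * of_int C" using E Ae
    by (metis of_int_add of_int_mult of_int_power)
  have I3: "\<beta>1 * \<beta>2 = of_int (t1*t2 - C) * of_int A + of_int e * \<beta>"
    using ident3[OF tsq Ec, of "of_int t1" "of_int t2"]
    unfolding \<beta>1_def \<beta>2_def \<beta>_def Et1 Et2 e_def Ae by simp
  have bezc: "of_int u * of_int a1 + of_int v * of_int a2 + of_int w * of_int e = (1::complex)"
    using bez by (metis of_int_1 of_int_add of_int_mult)
  have "lat (of_int A) \<beta> = {of_int x1*(of_int a1*of_int a2) + of_int x2*(of_int a1*\<beta>2) + of_int x3*(\<beta>1*of_int a2) + of_int x4*(\<beta>1*\<beta>2) | x1 x2 x3 x4. True}"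
  proof
    show "lat (of_int A) \<beta> \<subseteq> {of_int x1*(of_int a1*of_int a2) + of_int x2*(of_int a1*\<beta>2) + of_int x3*(\<beta>1*of_int a2) + of_int x4*(\<beta>1*\<beta>2) | x1 x2 x3 x4. True}"
    proof
      fix z assume "z \<in> lat (of_int A) \<beta>"
      then obtain x y where z: "z = of_int x * of_int A + of_int y * \<beta>" unfolding lat_def by blast
      define K where "K = -u*t2 - v*t1 + w*(t1*t2 - C)"
      have "of_int (x - y*K)*(of_int a1*of_int a2) + of_int (y*u)*(of_int a1*\<beta>2) + of_int (y*v)*(\<beta>1*of_int a2) + of_int (y*w)*(\<beta>1*\<beta>2)
        = of_int x * of_int A + of_int y * \<beta> * (of_int u * of_int a1 + of_int v * of_int a2 + of_int w * of_int e)"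
        unfolding I0 I1 I2 I3 K_def by (simp add: algebra_simps)
      also have "\<dots> = z" using bezc z by simp
      finally show "z \<in> {of_int x1*(of_int a1*of_int a2) + of_int x2*(of_int a1*\<beta>2) + of_int x3*(\<beta>1*of_int a2) + of_int x4*(\<beta>1*\<beta>2) | x1 x2 x3 x4. True}"
        by (metis (mono_tags, lifting) mem_Collect_eq)
    qed
  next
    show "{of_int x1*(of_int a1*of_int a2) + of_int x2*(of_int a1*\<beta>2) + of_int x3*(\<beta>1*of_int a2) + of_int x4*(\<beta>1*\<beta>2) | x1 x2 x3 x4. True} \<subseteq> lat (of_int A) \<beta>"
    proof
      fix z assume "z \<in> {of_int x1*(of_int a1*of_int a2) + of_int x2*(of_int a1*\<beta>2) + of_int x3*(\<beta>1*of_int a2) + of_int x4*(\<beta>1*\<beta>2) | x1 x2 x3 x4. True}"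
      then obtain x1 x2 x3 x4 where z: "z = of_int x1*(of_int a1*of_int a2) + of_int x2*(of_int a1*\<beta>2) + of_int x3*(\<beta>1*of_int a2) + of_int x4*(\<beta>1*\<beta>2)"
        by blast
      have "z = of_int (x1 - x2*t2 - x3*t1 + x4*(t1*t2 - C)) * of_int A + of_int (x2*a1 + x3*a2 + x4*e) * \<beta>"
        unfolding z I0 I1 I2 I3 by (simp add: algebra_simps)
      then show "z \<in> lat (of_int A) \<beta>" unfolding lat_def by blast
    qed
  qed
  then show ?thesis unfolding LF Lf Lg lmul_lat .
qed

lemma cmul_eq:
  assumes n: "n > 0" and df: "disc f = -4*n" and dc: "dirichlet_comp f g F"
  shows "cmul (qclass f) (qclass g) = qclass F"
proof -
  have ex: "\<exists>Z. \<exists>f'\<in>qclass f. \<exists>g'\<in>qclass g. \<exists>F'. dirichlet_comp f' g' F' \<and> Z = qclass F'"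
    using qclass_refl dc by blast
  from someI_ex[OF ex] obtain f' g' F' where f': "f' \<in> qclass f" and g': "g' \<in> qclass g"
    and dc': "dirichlet_comp f' g' F'" and cm: "cmul (qclass f) (qclass g) = qclass F'"
    unfolding cmul_def by blast
  obtain a1 b1 c1 where fe: "f = (a1,b1,c1)" by (cases f)
  obtain a2 b2 c2 where ge: "g = (a2,b2,c2)" by (cases g)
  obtain A B C where Fe: "F = (A,B,C)" by (cases F)
  obtain a1' b1' c1' where fe': "f' = (a1',b1',c1')" by (cases f')
  obtain a2' b2' c2' where ge': "g' = (a2',b2',c2')" by (cases g')
  obtain A' B' C' where Fe': "F' = (A',B',C')" by (cases F')
  from dc have dg: "disc g = -4*n" and a1: "a1 > 0" and a2: "a2 > 0" and Ae: "A = a1*a2"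
    and dF: "B^2 - 4*A*C = -4*n"
    using df unfolding dirichlet_comp_def fe ge Fe by auto
  from dc' have a1': "a1' > 0" and a2': "a2' > 0" and Ae': "A' = a1'*a2'"
    and dF': "B'^2 - 4*A'*C' = disc f'"
    unfolding dirichlet_comp_def fe' ge' Fe' by auto
  obtain \<alpha> \<beta> \<gamma> \<delta> where d1: "\<alpha>*\<delta>-\<beta>*\<gamma> = 1" and s1: "f' = subst f \<alpha> \<beta> \<gamma> \<delta>"
    using f' unfolding qclass_def by blast
  obtain \<alpha>2 \<beta>2 \<gamma>2 \<delta>2 where d2: "\<alpha>2*\<delta>2-\<beta>2*\<gamma>2 = 1" and s2: "g' = subst g \<alpha>2 \<beta>2 \<gamma>2 \<delta>2"
    using g' unfolding qclass_def by blast
  have df': "disc f' = -4*n" using s1 disc_subst[of f] d1 df by simp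
  obtain l1 where l1: "Lq n f' = (\<lambda>z. l1*z) ` Lq n f"
    using equiv_homothety[of n a1 b1 c1 \<alpha> \<delta> \<beta> \<gamma> a1' b1' c1'] n df d1 s1 a1 a1' fe fe' by auto
  obtain l2 where l2: "Lq n g' = (\<lambda>z. l2*z) ` Lq n g"
    using equiv_homothety[of n a2 b2 c2 \<alpha>2 \<delta>2 \<beta>2 \<gamma>2 a2' b2' c2'] n dg d2 s2 a2 a2' ge ge' by auto
  have "Lq n F' = lmul (Lq n f') (Lq n g')"
    using dirichlet_lat[of n a1' b1' c1' a2' b2' c2' A' B' C'] n dc' df' fe' ge' Fe' by simp
  also have "\<dots> = (\<lambda>z. (l1*l2)*z) ` lmul (Lq n f) (Lq n g)" unfolding l1 l2 by (rule lmul_scale)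
  also have "lmul (Lq n f) (Lq n g) = Lq n F"
    using dirichlet_lat[of n a1 b1 c1 a2 b2 c2 A B C] n dc df fe ge Fe by simp
  finally have L: "Lq n F' = (\<lambda>z. (l1*l2)*z) ` Lq n F" .
  have "F' \<in> qclass F"
    using homothety_equiv[of n A B C A' B' C' "l1*l2"] L n dF dF' df' Fe Fe' a1 a2 a1' a2' Ae Ae'
    by (simp add: disc_def)
  then have "qclass F' = qclass F" by (rule qclass_eq)
  then show ?thesis using cm by simp
qed

lemma coprime_by_primes:
  assumes "\<And>p. prime p \<Longrightarrow> p dvd x \<Longrightarrow> p dvd y \<Longrightarrow> False"
  shows "coprime x (y::int)"
proof (rule ccontr)
  assume "\<not> coprime x y"
  then have "gcd x y \<noteq> 1" by (simp add: coprime_iff_gcd_eq_1)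
  then have "\<bar>gcd x y\<bar> \<noteq> 1" by simp
  then obtain p where "prime p" "p dvd gcd x y" using prime_factor_int by blast
  then show False using assms by auto
qed

lemma rep_coprime:
  fixes a b c M :: int
  assumes prim: "gcd a (gcd b c) = 1" and M: "M \<noteq> 0"
  shows "\<exists>x y. coprime x y \<and> coprime (a*x^2 + b*x*y + c*y^2) M"
proof -
  define P where "P = {p::int. prime p \<and> p dvd M}"
  have finP: "finite P"
  proof -
    have "P \<subseteq> {d. d dvd M}" unfolding P_def by auto
    then show ?thesis by (rule finite_subset) (simp add: M)
  qed
  define T1 where "T1 = {p\<in>P. \<not> p dvd a}"
  define T2 where "T2 = {p\<in>P. p dvd a \<and> \<not> p dvd c}"
  define x where "x = \<Prod>T2"
  define y where "y = \<Prod>T1"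
  have fin1: "finite T1" "finite T2" using finP unfolding T1_def T2_def by auto
  have dx: "q dvd x \<longleftrightarrow> q \<in> T2" if "prime q" for q
  proof -
    have "q dvd x \<longleftrightarrow> (\<exists>p\<in>T2. q dvd p)" unfolding x_def using prime_dvd_prod_iff[OF fin1(2) that, of id] by simp
    also have "\<dots> \<longleftrightarrow> q \<in> T2"
    proof
      assume "\<exists>p\<in>T2. q dvd p"
      then obtain p where "p \<in> T2" "q dvd p" by blast
      moreover then have "prime p" unfolding T2_def P_def by simp
      ultimately show "q \<in> T2" using primes_dvd_imp_eq[OF that] by metis
    qed (rule bexI[of _ q], simp_all)
    finally show ?thesis .
  qed
  have dy: "q dvd y \<longleftrightarrow> q \<in> T1" if "prime q" for q
  proof -
    have "q dvd y \<longleftrightarrow> (\<exists>p\<in>T1. q dvd p)" unfolding y_def using prime_dvd_prod_iff[OF fin1(1) that, of id] by simp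
    also have "\<dots> \<longleftrightarrow> q \<in> T1"
    proof
      assume "\<exists>p\<in>T1. q dvd p"
      then obtain p where "p \<in> T1" "q dvd p" by blast
      moreover then have "prime p" unfolding T1_def P_def by simp
      ultimately show "q \<in> T1" using primes_dvd_imp_eq[OF that] by metis
    qed (rule bexI[of _ q], simp_all)
    finally show ?thesis .
  qed
  have cxy: "coprime x y"
  proof (rule coprime_by_primes)
    fix p assume "prime p" "p dvd x" "p dvd y"
    then have "p \<in> T1" "p \<in> T2" using dx dy by auto
    then show False unfolding T1_def T2_def by auto
  qed
  have "coprime (a*x^2 + b*x*y + c*y^2) M"
  proof (rule coprime_by_primes)
    fix p assume p: "prime p" and pf: "p dvd a*x^2 + b*x*y + c*y^2" and pM: "p dvd M"
    have pP: "p \<in> P" using p pM unfolding P_def by simp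
    show False
    proof (cases "p dvd a")
      case False
      then have "p \<in> T1" using pP unfolding T1_def by simp
      then have py: "p dvd y" using dy[OF p] by simp
      have "p \<notin> T2" using False unfolding T2_def by simp
      then have pnx: "\<not> p dvd x" using dx[OF p] by simp
      have "p dvd (a*x^2 + b*x*y + c*y^2) - y*(b*x + c*y)" using pf py by (intro dvd_diff) simp_all
      moreover have "(a*x^2 + b*x*y + c*y^2) - y*(b*x + c*y) = a*x^2" by (simp add: algebra_simps power2_eq_square)
      ultimately have "p dvd a*x^2" by simp
      then show False using False pnx p by (simp add: prime_dvd_mult_iff prime_dvd_power_iff)
    next
      case True
      show False
      proof (cases "p dvd c")
        case False
        then have "p \<in> T2" using pP True unfolding T2_def by simp
        then have px: "p dvd x" using dx[OF p] by simp
        have "p \<notin> T1" using True unfolding T1_def by simp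
        then have pny: "\<not> p dvd y" using dy[OF p] by simp
        have "p dvd (a*x^2 + b*x*y + c*y^2) - x*(a*x + b*y)" using pf px by (intro dvd_diff) simp_all
        moreover have "(a*x^2 + b*x*y + c*y^2) - x*(a*x + b*y) = c*y^2" by (simp add: algebra_simps power2_eq_square)
        ultimately have "p dvd c*y^2" by simp
        then show False using False pny p by (simp add: prime_dvd_mult_iff prime_dvd_power_iff)
      next
        case pc: True
        have pnb: "\<not> p dvd b"
        proof
          assume "p dvd b"
          then have "p dvd gcd a (gcd b c)" using True pc by simp
          then show False using prim p not_prime_unit[of p] by simp
        qed
        have "p \<notin> T2" using pc unfolding T2_def by simp
        then have pnx: "\<not> p dvd x" using dx[OF p] by simp
        have "p \<notin> T1" using True unfolding T1_def by simp
        then have pny: "\<not> p dvd y" using dy[OF p] by simp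
        have "p dvd (a*x^2 + b*x*y + c*y^2) - (a*x^2 + c*y^2)" using pf True pc by (intro dvd_diff) simp_all
        then have "p dvd b*x*y" by simp
        then show False using pnb pnx pny p by (simp add: prime_dvd_mult_iff)
      qed
    qed
  qed
  with cxy show ?thesis by blast
qed

lemma rep_coprime_subst:
  fixes a b c M :: int
  assumes prim: "gcd a (gcd b c) = 1" and M: "M \<noteq> 0"
  shows "\<exists>\<alpha> \<beta> \<gamma> \<delta>. \<alpha>*\<delta> - \<beta>*\<gamma> = 1 \<and> coprime (fst (subst (a,b,c) \<alpha> \<beta> \<gamma> \<delta>)) M"
proof -
  obtain x y where xy: "coprime x y" and c: "coprime (a*x^2 + b*x*y + c*y^2) M"
    using rep_coprime[OF prim M] by blast
  obtain u v where uv: "u*x + v*y = 1" using bezout_int[of x y] xy by (auto simp: coprime_iff_gcd_eq_1)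
  have "x*u - (-v)*y = 1" using uv by (simp add: algebra_simps)
  moreover have "fst (subst (a,b,c) x (-v) y u) = a*x^2 + b*x*y + c*y^2" by (simp add: subst_def)
  ultimately show ?thesis using c
    by (intro exI[of _ x] exI[of _ "-v"] exI[of _ y] exI[of _ u]) simp
qed

definition O1 :: "int \<Rightarrow> complex set" where
  "O1 b = {of_int u + of_int v * th b | u v. True}"
definition Zm :: "int \<Rightarrow> int \<Rightarrow> complex set" where
  "Zm b m = {of_int u + of_int (m*v) * th b | u v. True}"
definition pO :: "int \<Rightarrow> int \<Rightarrow> complex set" where
  "pO b m = {of_int m * z | z. z \<in> O1 b}"

lemma O1I: "of_int u + of_int v * th b \<in> O1 b" unfolding O1_def by blast
lemma O1_of_int: "of_int u \<in> O1 b" using O1I[of u 0 b] by simp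
lemma O1_of_nat: "of_nat u \<in> O1 b" using O1_of_int[of "int u" b] by simp
lemma O1_th: "th b \<in> O1 b" using O1I[of 0 1 b] by simp
lemma O1_add: "x \<in> O1 b \<Longrightarrow> y \<in> O1 b \<Longrightarrow> x + y \<in> O1 b"
proof -
  assume "x \<in> O1 b" "y \<in> O1 b"
  then obtain u1 v1 u2 v2 where "x = of_int u1 + of_int v1 * th b" "y = of_int u2 + of_int v2 * th b"
    unfolding O1_def by blast
  then have "x + y = of_int (u1+u2) + of_int (v1+v2) * th b" by (simp add: algebra_simps)
  then show ?thesis using O1I by metis
qed
lemma O1_uminus: "x \<in> O1 b \<Longrightarrow> - x \<in> O1 b"
proof -
  assume "x \<in> O1 b"
  then obtain u1 v1 where "x = of_int u1 + of_int v1 * th b" unfolding O1_def by blast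
  then have "- x = of_int (-u1) + of_int (-v1) * th b" by (simp add: algebra_simps)
  then show ?thesis using O1I by metis
qed
lemma O1_diff: "x \<in> O1 b \<Longrightarrow> y \<in> O1 b \<Longrightarrow> x - y \<in> O1 b"
  using O1_add O1_uminus by (metis diff_conv_add_uminus)
lemma O1_mult: "b \<ge> 0 \<Longrightarrow> x \<in> O1 b \<Longrightarrow> y \<in> O1 b \<Longrightarrow> x * y \<in> O1 b"
proof -
  assume b: "b \<ge> 0" and "x \<in> O1 b" "y \<in> O1 b"
  then obtain u1 v1 u2 v2 where xy: "x = of_int u1 + of_int v1 * th b" "y = of_int u2 + of_int v2 * th b"
    unfolding O1_def by blast
  have "x * y = of_int u1 * of_int u2 + of_int v1 * of_int v2 * (th b)^2 + of_int (u1*v2+u2*v1) * th b"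
    unfolding xy by (simp add: algebra_simps power2_eq_square)
  also have "\<dots> = of_int (u1*u2 - v1*v2*b) + of_int (u1*v2+u2*v1) * th b" using th_sq[OF b] by simp
  finally show ?thesis using O1I by metis
qed
lemma O1_pow: "b \<ge> 0 \<Longrightarrow> x \<in> O1 b \<Longrightarrow> x ^ k \<in> O1 b"
  by (induction k) (auto intro: O1_mult O1_of_int[of 1, simplified])

lemma pOI: "z \<in> O1 b \<Longrightarrow> of_int m * z \<in> pO b m" unfolding pO_def by blast
lemma pO_zero: "0 \<in> pO b m" using pOI[OF O1_of_int[of 0]] by simp
lemma pO_add: "x \<in> pO b m \<Longrightarrow> y \<in> pO b m \<Longrightarrow> x + y \<in> pO b m"
proof -
  assume "x \<in> pO b m" "y \<in> pO b m"
  then obtain z1 z2 where "z1 \<in> O1 b" "z2 \<in> O1 b" "x = of_int m * z1" "y = of_int m * z2" unfolding pO_def by blast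
  then show ?thesis using pOI[OF O1_add[of z1 b z2], of m] by (simp add: distrib_left)
qed
lemma pO_uminus: "x \<in> pO b m \<Longrightarrow> - x \<in> pO b m"
proof -
  assume "x \<in> pO b m"
  then obtain z1 where "z1 \<in> O1 b" "x = of_int m * z1" unfolding pO_def by blast
  then show ?thesis using pOI[OF O1_uminus[of z1 b], of m] by simp
qed
lemma pO_diff: "x \<in> pO b m \<Longrightarrow> y \<in> pO b m \<Longrightarrow> x - y \<in> pO b m"
  using pO_add pO_uminus by (metis diff_conv_add_uminus)
lemma pO_mult: "b \<ge> 0 \<Longrightarrow> x \<in> pO b m \<Longrightarrow> y \<in> O1 b \<Longrightarrow> x * y \<in> pO b m"
proof -
  assume b: "b \<ge> 0" and "x \<in> pO b m" "y \<in> O1 b"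
  then obtain z1 where "z1 \<in> O1 b" "x = of_int m * z1" unfolding pO_def by blast
  then show ?thesis using pOI[OF O1_mult[OF b, of z1 y], of m] \<open>y \<in> O1 b\<close> by (simp add: mult.assoc)
qed
lemma pO_O1: "x \<in> pO b m \<Longrightarrow> x \<in> O1 b"
proof -
  assume "x \<in> pO b m"
  then obtain u v where "x = of_int m * (of_int u + of_int v * th b)" unfolding pO_def O1_def by blast
  then have "x = of_int (m*u) + of_int (m*v) * th b" by (simp add: algebra_simps)
  then show ?thesis using O1I by metis
qed
lemma pO_dvd: "m dvd c \<Longrightarrow> z \<in> O1 b \<Longrightarrow> of_int c * z \<in> pO b m"
proof -
  assume "m dvd c" "z \<in> O1 b"
  then obtain k where "c = m * k" by blast
  then have "of_int c * z = of_int m * (of_int k * z)" by (simp add: mult.assoc)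
  moreover have "of_int k * z \<in> O1 b"
  proof -
    from \<open>z \<in> O1 b\<close> obtain u v where "z = of_int u + of_int v * th b" unfolding O1_def by blast
    then have "of_int k * z = of_int (k*u) + of_int (k*v) * th b" by (simp add: algebra_simps)
    then show ?thesis using O1I by metis
  qed
  ultimately show ?thesis using pOI by metis
qed
lemma pO_sum: "finite S \<Longrightarrow> (\<And>k. k \<in> S \<Longrightarrow> f k \<in> pO b m) \<Longrightarrow> sum f S \<in> pO b m"
  by (induction S rule: finite_induct) (auto intro: pO_add pO_zero)

lemma ZmI: "of_int u + of_int (m*v) * th b \<in> Zm b m" unfolding Zm_def by blast
lemma Zm_of_int: "of_int u \<in> Zm b m" using ZmI[of u m 0 b] by simp
lemma Zm_pO: "x \<in> Zm b m \<Longrightarrow> y \<in> pO b m \<Longrightarrow> x + y \<in> Zm b m"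
proof -
  assume "x \<in> Zm b m" "y \<in> pO b m"
  then obtain u1 v1 u2 v2 where xy: "x = of_int u1 + of_int (m*v1) * th b" "y = of_int m * (of_int u2 + of_int v2 * th b)"
    unfolding Zm_def pO_def O1_def by blast
  then have "x + y = of_int (u1 + m*u2) + of_int (m*(v1+v2)) * th b" by (simp add: algebra_simps)
  then show ?thesis using ZmI by metis
qed
lemma Zm_mult: "b \<ge> 0 \<Longrightarrow> x \<in> Zm b m \<Longrightarrow> y \<in> Zm b m \<Longrightarrow> x * y \<in> Zm b m"
proof -
  assume b: "b \<ge> 0" and "x \<in> Zm b m" "y \<in> Zm b m"
  then obtain u1 v1 u2 v2 where xy: "x = of_int u1 + of_int (m*v1) * th b" "y = of_int u2 + of_int (m*v2) * th b"
    unfolding Zm_def by blast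
  have "x * y = of_int u1 * of_int u2 + of_int (m*v1) * of_int (m*v2) * (th b)^2 + of_int (m*(u1*v2+u2*v1)) * th b"
    unfolding xy by (simp add: algebra_simps power2_eq_square)
  also have "\<dots> = of_int (u1*u2 - m*v1*(m*v2)*b) + of_int (m*(u1*v2+u2*v1)) * th b" using th_sq[OF b] by simp
  finally show ?thesis using ZmI by metis
qed
lemma Zm_pow: "b \<ge> 0 \<Longrightarrow> x \<in> Zm b m \<Longrightarrow> x ^ k \<in> Zm b m"
  by (induction k) (auto intro: Zm_mult Zm_of_int[of 1, simplified])

lemma coeff_unique:
  assumes b: "b > 0" and e: "of_int u + of_int v * th b = of_int u' + of_int v' * th b"
  shows "u = u' \<and> v = v'"
proof -
  have "Im (of_int u + of_int v * th b) = Im (of_int u' + of_int v' * th b)" using e by simp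
  then have "real_of_int v * sqrt (real_of_int b) = real_of_int v' * sqrt (real_of_int b)" by simp
  moreover have "sqrt (real_of_int b) > 0" using b by simp
  ultimately have "v = v'" by simp
  moreover have "Re (of_int u + of_int v * th b) = Re (of_int u' + of_int v' * th b)" using e by simp
  ultimately show ?thesis by simp
qed

lemma Zm_coeff:
  assumes b: "b > 0" and x: "x \<in> Zm b m" and e: "x = of_int u + of_int v * th b"
  shows "m dvd v"
proof -
  obtain u' v' where "x = of_int u' + of_int (m*v') * th b" using x unfolding Zm_def by blast
  then have "v = m * v'" using coeff_unique[OF b, of u v u' "m*v'"] e by simp
  then show ?thesis by simp
qed

lemma O1_coeff_dvd:
  assumes b: "b > 0" and x: "x \<in> O1 b" and px: "of_int A * x \<in> pO b p" and cop: "coprime A p"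
  shows "\<exists>c d. x = of_int (p*c) + of_int (p*d) * th b"
proof -
  obtain u v where xe: "x = of_int u + of_int v * th b" using x unfolding O1_def by blast
  obtain u' v' where "of_int A * x = of_int p * (of_int u' + of_int v' * th b)"
    using px unfolding pO_def O1_def by blast
  then have "of_int (A*u) + of_int (A*v) * th b = of_int (p*u') + of_int (p*v') * th b"
    unfolding xe by (simp add: algebra_simps)
  then have "A*u = p*u'" "A*v = p*v'" using coeff_unique[OF b] by blast+
  then have "p dvd A*u" "p dvd A*v" by (metis dvd_triv_left)+
  then have "p dvd u" "p dvd v" using cop by (metis coprime_commute coprime_dvd_mult_right_iff)+
  then obtain c d where "u = p*c" "v = p*d" by (auto elim!: dvdE)
  then show ?thesis using xe by blast
qed

lemma fermat_int1:
  fixes p :: nat and x :: int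
  assumes p: "prime p" "p > 2" and nd: "\<not> int p dvd x"
  shows "[x^(p-1) = 1] (mod int p)"
proof -
  have pi: "prime (int p)" using p by simp
  have odd: "odd p" using prime_odd_nat p by blast
  have nz: "\<not> [x^2 = 0] (mod int p)"
  proof
    assume "[x^2 = 0] (mod int p)"
    then have "int p dvd x^2" by (simp add: cong_0_iff)
    then have "int p dvd x" using prime_dvd_power[OF pi] by blast
    then show False using nd by simp
  qed
  have "QuadRes (int p) (x^2)" unfolding QuadRes_def by (rule exI[of _ x]) simp
  then have L: "Legendre (x^2) (int p) = 1" using nz unfolding Legendre_def by simp
  have "[Legendre (x^2) (int p) = (x^2) ^ ((p - 1) div 2)] (mod int p)"
    using euler_criterion[OF p] by blast
  moreover have "(x^2) ^ ((p - 1) div 2) = x^(p-1)"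
  proof -
    obtain h where ph: "p = 2*h+1" using odd by (metis oddE)
    then show ?thesis by (simp add: power_mult)
  qed
  ultimately show ?thesis using L by (metis cong_sym)
qed

lemma fermat_int:
  fixes p :: nat and x :: int
  assumes p: "prime p" "p > 2"
  shows "[x^p = x] (mod int p)"
proof (cases "int p dvd x")
  case True
  then have "[x = 0] (mod int p)" by (simp add: cong_0_iff)
  moreover then have "[x^p = 0^p] (mod int p)" by (rule cong_pow)
  moreover have "(0::int)^p = 0" using p by simp
  ultimately have "[x^p = 0] (mod int p)" "[0 = x] (mod int p)" by (simp_all add: cong_sym)
  then show ?thesis by (rule cong_trans)
next
  case False
  have "[x * x^(p-1) = x * 1] (mod int p)" using fermat_int1[OF p False] by (rule cong_scalar_left)
  moreover have "x * x^(p-1) = x^p" using p by (cases p) simp_all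
  ultimately show ?thesis by simp
qed

lemma binom_split:
  "(a + c :: 'a::comm_ring_1)^p = a^p + (\<Sum>k<p. of_nat (p choose k) * a^k * c^(p-k))"
proof -
  have "(a + c)^p = (\<Sum>k\<le>p. of_nat (p choose k) * a^k * c^(p-k))" by (rule binomial_ring)
  also have "\<dots> = (\<Sum>k<Suc p. of_nat (p choose k) * a^k * c^(p-k))" by (simp add: lessThan_Suc_atMost)
  also have "\<dots> = (\<Sum>k<p. of_nat (p choose k) * a^k * c^(p-k)) + a^p" by simp
  finally show ?thesis by simp
qed

lemma frob1:
  fixes p :: nat
  assumes b: "b \<ge> 0" and p: "prime p"
  shows "(of_int u + of_int v * th b)^p - (of_int u^p + (of_int v * th b)^p) \<in> pO b (int p)"
proof -
  define a where "a = (of_int u :: complex)"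
  define c where "c = of_int v * th b"
  have aO: "a \<in> O1 b" unfolding a_def by (rule O1_of_int)
  have cO: "c \<in> O1 b" unfolding c_def using O1I[of 0 v b] by simp
  define f where "f k = of_nat (p choose k) * a^k * c^(p-k)" for k
  define g where "g k = (if k = 0 then c^p else (0::complex))" for k :: nat
  have sg: "(\<Sum>k<p. g k) = c^p" unfolding g_def using p prime_gt_0_nat by simp
  have "(\<Sum>k<p. f k - g k) \<in> pO b (int p)"
  proof (rule pO_sum)
    fix k assume k: "k \<in> {..<p}"
    show "f k - g k \<in> pO b (int p)"
    proof (cases "k = 0")
      case True then show ?thesis by (simp add: f_def g_def pO_zero)
    next
      case False
      then have "p dvd (p choose k)" using dvd_choose_prime k p by (metis lessThan_iff prime_gt_0_nat neq0_conv)
      then have "int p dvd int (p choose k)" by simp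
      moreover have "a^k * c^(p-k) \<in> O1 b" using aO cO b by (intro O1_mult O1_pow)
      ultimately have "of_int (int (p choose k)) * (a^k * c^(p-k)) \<in> pO b (int p)" by (rule pO_dvd)
      then show ?thesis using False by (simp add: f_def g_def mult.assoc)
    qed
  qed simp
  moreover have "(\<Sum>k<p. f k - g k) = (a + c)^p - (a^p + c^p)"
    using binom_split[of a c p] sg unfolding f_def by (simp add: sum_subtractf)
  ultimately show ?thesis unfolding a_def c_def by simp
qed

lemma th_pow_odd:
  assumes b: "b \<ge> 0" and odd: "odd p"
  shows "th b ^ p = of_int ((-b)^((p - 1) div 2)) * th b"
proof -
  obtain h where ph: "p = 2*h + 1" using odd by (metis oddE)
  have "th b ^ p = ((th b)^2)^h * th b" unfolding ph by (simp add: power_mult power_add)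
  also have "\<dots> = of_int ((-b)^h) * th b" using th_sq[OF b] by simp
  finally show ?thesis using ph by simp
qed

lemma frob2:
  fixes p :: nat
  assumes b: "b \<ge> 0" and p: "prime p" "p > 2" and L: "[(-b)^((p - 1) div 2) = L] (mod int p)"
  shows "(of_int u + of_int v * th b)^p - (of_int u + of_int (v*L) * th b) \<in> pO b (int p)"
proof -
  have odd: "odd p" using prime_odd_nat p by blast
  have e: "(of_int v * th b)^p = of_int (v^p * (-b)^((p - 1) div 2)) * th b"
    using th_pow_odd[OF b odd] by (simp add: power_mult_distrib)
  have c1: "int p dvd u^p - u" using fermat_int[OF p, of u] by (simp add: cong_iff_dvd_diff)
  have "[v^p * (-b)^((p - 1) div 2) = v * L] (mod int p)"
    using fermat_int[OF p, of v] L by (rule cong_mult)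
  then have c2: "int p dvd v^p * (-b)^((p - 1) div 2) - v * L" by (simp add: cong_iff_dvd_diff)
  have "(of_int u^p + (of_int v * th b)^p) - (of_int u + of_int (v*L) * th b)
     = of_int (u^p - u) * 1 + of_int (v^p * (-b)^((p - 1) div 2) - v * L) * th b"
    unfolding e by (simp add: algebra_simps)
  also have "\<dots> \<in> pO b (int p)"
    by (intro pO_add pO_dvd c1 c2 O1_th O1_of_int[of 1, simplified])
  finally have "(of_int u^p + (of_int v * th b)^p) - (of_int u + of_int (v*L) * th b) \<in> pO b (int p)" .
  from pO_add[OF frob1[OF b p(1), of u v] this] show ?thesis by (simp add: algebra_simps)
qed

lemma frob_exp:
  fixes p :: nat
  assumes b: "b > 0" and p: "prime p" "p > 2" and L: "[(-b)^((p - 1) div 2) = L] (mod int p)"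
    and Lv: "L = 0 \<or> L = 1 \<or> L = -1" and cop: "coprime (u^2 + b*v^2) (int p)"
  shows "(of_int u + of_int v * th b)^(nat (int p - L)) \<in> Zm b (int p)"
proof -
  have b0: "b \<ge> 0" using b by simp
  define \<mu> where "\<mu> = (of_int u + of_int v * th b :: complex)"
  define \<mu>c where "\<mu>c = (of_int u - of_int v * th b :: complex)"
  have muO: "\<mu> \<in> O1 b" unfolding \<mu>_def by (rule O1I)
  have mucO: "\<mu>c \<in> O1 b" unfolding \<mu>c_def using O1I[of u "-v" b] by simp
  have norm: "\<mu> * \<mu>c = of_int (u^2 + b*v^2)"
    unfolding \<mu>_def \<mu>c_def using th_sq[OF b0] by (simp add: algebra_simps power2_eq_square)
  have F: "\<mu>^p - (of_int u + of_int (v*L) * th b) \<in> pO b (int p)"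
    unfolding \<mu>_def by (rule frob2[OF b0 p L])
  from Lv consider "L = 0" | "L = 1" | "L = -1" by blast
  then show ?thesis
  proof cases
    case 1
    then have "\<mu>^p - of_int u \<in> pO b (int p)" using F by simp
    from Zm_pO[OF Zm_of_int[of u] this] have "\<mu>^p \<in> Zm b (int p)" by simp
    then show ?thesis using 1 by (simp add: \<mu>_def)
  next
    case 3
    then have "\<mu>^p - \<mu>c \<in> pO b (int p)" using F by (simp add: \<mu>c_def)
    then have "(\<mu>^p - \<mu>c) * \<mu> \<in> pO b (int p)" using pO_mult[OF b0 _ muO] by blast
    from Zm_pO[OF Zm_of_int[of "u^2 + b*v^2"] this]
    have "of_int (u^2 + b*v^2) + (\<mu>^p - \<mu>c) * \<mu> \<in> Zm b (int p)" .
    moreover have "of_int (u^2 + b*v^2) + (\<mu>^p - \<mu>c) * \<mu> = \<mu>^(Suc p)"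
      using norm by (simp add: algebra_simps)
    moreover have "nat (int p - L) = Suc p" using 3 by simp
    ultimately show ?thesis by (simp add: \<mu>_def)
  next
    case 2
    then have "\<mu>^p - \<mu> \<in> pO b (int p)" using F by (simp add: \<mu>_def)
    then have "(\<mu>^p - \<mu>) * \<mu>c \<in> pO b (int p)" using pO_mult[OF b0 _ mucO] by blast
    moreover have "(\<mu>^p - \<mu>) * \<mu>c = of_int (u^2 + b*v^2) * (\<mu>^(p-1) - 1)"
    proof -
      have "\<mu>^p = \<mu> * \<mu>^(p-1)" using p by (cases p) simp_all
      then have "(\<mu>^p - \<mu>) * \<mu>c = (\<mu> * \<mu>c) * (\<mu>^(p-1) - 1)" by (simp add: algebra_simps)
      then show ?thesis using norm by simp
    qed
    ultimately have "of_int (u^2 + b*v^2) * (\<mu>^(p-1) - 1) \<in> pO b (int p)" by simp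
    moreover have "\<mu>^(p-1) - 1 \<in> O1 b" using O1_diff[OF O1_pow[OF b0 muO] O1_of_int[of 1, simplified]] by simp
    ultimately obtain c d where cd: "\<mu>^(p-1) - 1 = of_int (int p*c) + of_int (int p*d) * th b"
      using O1_coeff_dvd[OF b] cop by blast
    then have "\<mu>^(p-1) = of_int (1 + int p * c) + of_int (int p*d) * th b" by (simp add: algebra_simps)
    then have "\<mu>^(p-1) \<in> Zm b (int p)" using ZmI by metis
    moreover have "nat (int p - L) = p - 1" using 2 p by auto
    ultimately show ?thesis by (simp add: \<mu>_def)
  qed
qed

lemma lift:
  fixes p :: nat
  assumes b: "b \<ge> 0" and p: "prime p" and j: "j \<ge> 1" and x: "x \<in> Zm b (int p^j)"
  shows "x^p \<in> Zm b (int p^(j+1))"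
proof -
  obtain u v where xe: "x = of_int u + of_int (int p^j * v) * th b" using x unfolding Zm_def by blast
  define a where "a = (of_int u :: complex)"
  define y where "y = of_int v * th b"
  define m where "m = int p ^ j"
  have yO: "y \<in> O1 b" unfolding y_def using O1I[of 0 v b] by simp
  have aO: "a \<in> O1 b" unfolding a_def by (rule O1_of_int)
  have x2: "x = a + of_int m * y" unfolding xe a_def y_def m_def by (simp add: mult.assoc)
  have "(\<Sum>k<p. of_nat (p choose k) * a^k * (of_int m * y)^(p-k)) \<in> pO b (int p^(j+1))"
  proof (rule pO_sum)
    fix k assume k: "k \<in> {..<p}"
    have eq: "of_nat (p choose k) * a^k * (of_int m * y)^(p-k) = of_int (int (p choose k) * m^(p-k)) * (a^k * y^(p-k))"
      by (simp add: power_mult_distrib algebra_simps)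
    have dv: "int p^(j+1) dvd int (p choose k) * m^(p-k)"
    proof (cases "k = p - 1")
      case True
      then have "p choose k = p" using p binomial_symmetric[of 1 p] prime_gt_0_nat[OF p] by simp
      moreover have "p - k = 1" using True k by auto
      ultimately show ?thesis unfolding m_def by simp
    next
      case False
      then have pk: "p - k \<ge> 2" using k by auto
      have "j*2 \<le> j*(p-k)" using pk by (rule mult_le_mono2)
      then have "j+1 \<le> j*(p-k)" using j by linarith
      then have "int p^(j+1) dvd int p^(j*(p-k))" by (rule le_imp_power_dvd)
      also have "int p^(j*(p-k)) = m^(p-k)" unfolding m_def by (simp add: power_mult)
      finally show ?thesis by simp
    qed
    have "a^k * y^(p-k) \<in> O1 b" using aO yO b by (intro O1_mult O1_pow)
    from pO_dvd[OF dv this] show "of_nat (p choose k) * a^k * (of_int m * y)^(p-k) \<in> pO b (int p^(j+1))"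
      unfolding eq .
  qed simp
  from Zm_pO[OF Zm_of_int[of "u^p"] this]
  have "of_int (u^p) + (\<Sum>k<p. of_nat (p choose k) * a^k * (of_int m * y)^(p-k)) \<in> Zm b (int p^(j+1))" .
  moreover have "x^p = of_int (u^p) + (\<Sum>k<p. of_nat (p choose k) * a^k * (of_int m * y)^(p-k))"
    unfolding x2 binom_split by (simp add: a_def)
  ultimately show ?thesis by simp
qed

lemma lift_iter:
  fixes p :: nat
  assumes b: "b \<ge> 0" and p: "prime p" and x: "x \<in> Zm b (int p)"
  shows "x^(p^i) \<in> Zm b (int p^(i+1))"
proof (induction i)
  case 0 then show ?case using x by simp
next
  case (Suc i)
  have "(x^(p^i))^p \<in> Zm b (int p^(i+1+1))" using lift[OF b p _ Suc] by simp
  then show ?case by (simp add: power_mult[symmetric] mult.commute)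
qed

lemma subst_10b: "subst (1,0,b) \<alpha> \<beta> \<gamma> \<delta> = (\<alpha>^2 + b*\<gamma>^2, 2*\<alpha>*\<beta> + 2*b*\<gamma>*\<delta>, \<beta>^2 + b*\<delta>^2)"
  by (simp add: subst_def)

lemma subst_subst_ex:
  "\<exists>a' b' c' d'. a'*d'-b'*c' = (a1*d1-b1*c1)*(a2*d2-b2*c2) \<and>
     subst (subst f a1 b1 c1 d1) a2 b2 c2 d2 = subst f a' b' c' d'"
  by (intro exI[of _ "a1*a2 + b1*c2"] exI[of _ "a1*b2 + b1*d2"] exI[of _ "c1*a2 + d1*c2"] exI[of _ "c1*b2 + d1*d2"])
     (simp add: subst_comp det_mult)

lemma class_chain:
  assumes "x \<in> qclass f"
  shows "\<exists>a' b' c' d'. a'*d' - b'*c' = a*d - b*c \<and> subst x a b c d = subst f a' b' c' d'"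
proof -
  obtain a1 b1 c1 d1 where "a1*d1-b1*c1 = 1" "x = subst f a1 b1 c1 d1" using assms unfolding qclass_def by blast
  then show ?thesis using subst_subst_ex[of a1 d1 b1 c1 a d b c f] by auto
qed

lemma th_scale: "s \<ge> 0 \<Longrightarrow> b \<ge> 0 \<Longrightarrow> th (s^2*b) = of_int s * th b"
  by (simp add: th_def real_sqrt_mult)

lemma lmul_incl:
  assumes b: "b \<ge> 0" and S: "\<forall>z\<in>S. \<exists>w\<in>O1 b. z = c1*w" and T: "\<forall>z\<in>T. \<exists>w\<in>O1 b. z = c2*w"
  shows "\<forall>z\<in>lmul S T. \<exists>w\<in>O1 b. z = (c1*c2)*w"
proof
  fix z assume "z \<in> lmul S T"
  then obtain s1 t1 s2 t2 where st: "s1 \<in> S" "t1 \<in> T" "s2 \<in> S" "t2 \<in> T" "z = s1*t1 + s2*t2"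
    unfolding lmul_def by blast
  obtain w1 w2 w3 w4 where w: "w1 \<in> O1 b" "w2 \<in> O1 b" "w3 \<in> O1 b" "w4 \<in> O1 b"
    "s1 = c1*w1" "t1 = c2*w2" "s2 = c1*w3" "t2 = c2*w4" using S T st by metis
  have "z = (c1*c2)*(w1*w2 + w3*w4)" using st w by (simp add: algebra_simps)
  moreover have "w1*w2 + w3*w4 \<in> O1 b" using w b by (intro O1_add O1_mult)
  ultimately show "\<exists>w\<in>O1 b. z = (c1*c2)*w" by blast
qed

lemma coprime_shift: "coprime A (B::int) \<Longrightarrow> coprime A (B + A*m)"
  by (rule coprime_by_primes) (metis coprime_common_divisor dvd_add_left_iff dvd_mult2 not_prime_unit)

lemma power_forms:
  fixes A B C b s t11 t12 t21 t22 :: int and h :: "qform set"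
  assumes b: "b > 0" and s: "s > 0" and n': "n' = s^2*b"
    and fe: "(A,B,C) = subst (1,0,b) t11 t12 t21 t22" and det: "t11*t22 - t12*t21 = s"
    and A: "A > 0" and cop: "coprime A B" and h: "h = qclass (A,B,C)"
  shows "\<exists>Ak Bk Ck. cpow (-4*n') h k = qclass (Ak,Bk,Ck) \<and> Ak = A^k \<and> Bk^2 - 4*Ak*Ck = -4*n'
     \<and> (k \<ge> 1 \<longrightarrow> [Bk = B] (mod 2*A))
     \<and> (\<forall>z\<in>Lq n' (Ak,Bk,Ck). \<exists>w\<in>O1 b. z = (cnj (of_int t11 + of_int t21 * th b))^k * w)"
proof -
  have b0: "b \<ge> 0" using b by simp
  have npos: "n' > 0" using n' b s by simp
  define \<mu> where "\<mu> = of_int t11 + of_int t21 * th b"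
  have cmu: "cnj \<mu> = of_int t11 - of_int t21 * th b" unfolding \<mu>_def by simp
  have Ae: "A = t11^2 + b*t21^2" and Be: "B = 2*t11*t12 + 2*b*t21*t22" and Ce: "C = t12^2 + b*t22^2"
    using fe by (simp_all add: subst_10b)
  have Bh: "B div 2 = t11*t12 + b*t21*t22" using Be by simp
  have discf: "B^2 - 4*A*C = -4*n'"
    unfolding Ae Be Ce n' det[symmetric] by (simp add: algebra_simps power2_eq_square)
  have discf': "disc (A,B,C) = -4*n'" using discf by (simp add: disc_def)
  have thn: "th n' = of_int s * th b" using th_scale[of s b] s b n' by simp
  have Lf: "\<forall>z\<in>Lq n' (A,B,C). \<exists>w\<in>O1 b. z = cnj \<mu> * w"
  proof
    fix z assume "z \<in> Lq n' (A,B,C)"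
    then obtain x y where z: "z = of_int x * of_int A + of_int y * (of_int (B div 2) + th n')"
      unfolding Lq_def lat_def by auto
    define \<eta> where "\<eta> = of_int t12 + of_int t22 * th b"
    have "cnj \<mu> * \<mu> = of_int A" unfolding cmu \<mu>_def Ae using th_sq[OF b0]
      by (simp add: algebra_simps power2_eq_square)
    moreover have "cnj \<mu> * \<eta> = of_int (B div 2) + th n'" unfolding cmu \<eta>_def Bh thn det[symmetric] using th_sq[OF b0]
      by (simp add: algebra_simps power2_eq_square)
    moreover have "cnj \<mu> * (of_int x * \<mu> + of_int y * \<eta>) = of_int x * (cnj \<mu> * \<mu>) + of_int y * (cnj \<mu> * \<eta>)"
      by (simp add: algebra_simps)
    ultimately have "z = cnj \<mu> * (of_int x * \<mu> + of_int y * \<eta>)" unfolding z by simp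
    moreover have "of_int x * \<mu> + of_int y * \<eta> \<in> O1 b" unfolding \<mu>_def \<eta>_def
      by (intro O1_add O1_mult b0 O1_of_int O1I)
    ultimately show "\<exists>w\<in>O1 b. z = cnj \<mu> * w" by blast
  qed
  have L0: "\<forall>z\<in>Lq n' (1,0,n'). \<exists>w\<in>O1 b. z = (cnj \<mu>)^0 * w"
  proof
    fix z assume "z \<in> Lq n' (1,0,n')"
    then obtain x y where "z = of_int x * 1 + of_int y * (0 + th n')" unfolding Lq_def lat_def by auto
    then have "z = of_int x + of_int (y*s) * th b" using thn by (simp add: algebra_simps)
    then show "\<exists>w\<in>O1 b. z = (cnj \<mu>)^0 * w" using O1I[of x "y*s" b] by simp
  qed
  have cp0: "cpow (-4*n') h 0 = qclass (1,0,n')"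
  proof -
    have "principal_form (-4*n') = (1, 0, n')" unfolding principal_form_def by simp
    then show ?thesis by (simp add: one_class_def)
  qed
  show ?thesis
  proof (induction k)
    case 0
    note cp0
    moreover note L0
    ultimately show ?case unfolding \<mu>_def
      by (intro exI[of _ 1] exI[of _ 0] exI[of _ n']) simp
  next
    case (Suc k)
    obtain Ak Bk Ck where IH: "cpow (-4*n') h k = qclass (Ak,Bk,Ck)" "Ak = A^k" "Bk^2 - 4*Ak*Ck = -4*n'"
      "k \<ge> 1 \<longrightarrow> [Bk = B] (mod 2*A)" "\<forall>z\<in>Lq n' (Ak,Bk,Ck). \<exists>w\<in>O1 b. z = (cnj \<mu>)^k * w"
      using Suc.IH unfolding \<mu>_def by blast
    have "\<exists>G F. cpow (-4*n') h k = qclass G \<and> (\<forall>z\<in>Lq n' G. \<exists>w\<in>O1 b. z = (cnj \<mu>)^k * w) \<and>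
              dirichlet_comp (A,B,C) G F \<and> fst F = A^(Suc k) \<and>
              fst (snd F)^2 - 4*fst F*snd (snd F) = -4*n' \<and> [fst (snd F) = B] (mod 2*A)"
    proof (cases "k = 0")
      case True
      have "even B" using Be by simp
      then have "[B = 0] (mod 2*1)" by (simp add: cong_0_iff)
      then have "dirichlet_comp (A,B,C) (1,0,n') (A,B,C)"
        unfolding dirichlet_comp_def using A discf' by (simp add: disc_def)
      then show ?thesis using True discf cp0 L0 by (intro exI[of _ "(1,0,n')"] exI[of _ "(A,B,C)"]) simp
    next
      case False
      then obtain j where kj: "k = Suc j" by (cases k) auto
      have cB: "[Bk = B] (mod 2*A)" using IH(4) False by simp
      then obtain m where m: "Bk = B + 2*A*m" using cong_iff_lin[of B Bk "2*A"] cong_sym by (metis mult.assoc)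
      have copk: "coprime Bk A" using coprime_shift[OF cop, of "2*m"] m by (simp add: coprime_commute mult.assoc mult.left_commute)
      obtain x y where xy: "x*Bk + y*A = 1" using bezout_int[of Bk A] copk by (auto simp: coprime_iff_gcd_eq_1)
      define t where "t = - Ck*x"
      define B' where "B' = Bk + 2*A^k*t"
      define C' where "C' = Ck*y + A^j*t^2"
      have Pk: "A^k = A*A^j" using kj by simp
      have dF': "B'^2 - 4*(A^(Suc k))*C' = -4*n'"
      proof -
        have "B'^2 - 4*(A^(Suc k))*C' - (Bk^2 - 4*A^k*Ck) =
          4*A^k*Bk*(t + Ck*x) + 4*A^k*Ck*((1 - x*Bk) - A*y) + 4*A^k*t^2*(A^k - A*A^j)"
          unfolding B'_def C'_def by (simp add: algebra_simps power2_eq_square)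
        also have "\<dots> = 0" using xy Pk unfolding t_def by (simp add: algebra_simps)
        finally show ?thesis using IH(2,3) by simp
      qed
      have g1: "coprime A ((B + Bk) div 2)"
      proof -
        have "(B + Bk) div 2 = B + A*m" using m by simp
        then show ?thesis using coprime_shift[OF cop] by simp
      qed
      have gcd1: "gcd A (gcd (A^k) ((B + Bk) div 2)) = 1"
      proof -
        have "gcd A (gcd (A^k) ((B + Bk) div 2)) = gcd (A^k) (gcd A ((B + Bk) div 2))" by (rule gcd.left_commute)
        then show ?thesis using g1 by (simp add: coprime_iff_gcd_eq_1)
      qed
      have c1: "[B' = B] (mod 2*A)"
      proof -
        have "B' = B + 2*A*(m + A^j*t)" unfolding B'_def m Pk by (simp add: algebra_simps)
        then show ?thesis using cong_iff_lin[of B B' "2*A"] by (metis cong_sym)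
      qed
      have c2: "[B' = Bk] (mod 2*A^k)"
      proof -
        have "B' = Bk + 2*A^k*t" unfolding B'_def by simp
        then show ?thesis using cong_iff_lin[of Bk B' "2*A^k"] by (metis cong_sym)
      qed
      have "disc (A,B,C) = disc (Ak,Bk,Ck)" using IH(3) discf by (simp add: disc_def)
      then have "dirichlet_comp (A,B,C) (Ak,Bk,Ck) (A^(Suc k), B', C')"
        unfolding dirichlet_comp_def using A gcd1 c1 c2 dF' discf IH(2) by (simp add: disc_def)
      then show ?thesis using dF' c1 IH(1,5) by (intro exI[of _ "(Ak,Bk,Ck)"] exI[of _ "(A^(Suc k), B', C')"]) simp
    qed
    then obtain G A' B' C' where dc: "dirichlet_comp (A,B,C) G (A',B',C')" and
      A'e: "A' = A^(Suc k)" and dF': "B'^2 - 4*A'*C' = -4*n'" and cB': "[B' = B] (mod 2*A)"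
      and cpG: "cpow (-4*n') h k = qclass G" and LG: "\<forall>z\<in>Lq n' G. \<exists>w\<in>O1 b. z = (cnj \<mu>)^k * w"
      by auto
    obtain Ak' Bk' Ck' where Ge: "G = (Ak',Bk',Ck')" by (cases G)
    have "cpow (-4*n') h (Suc k) = cmul h (cpow (-4*n') h k)" by simp
    also have "\<dots> = cmul (qclass (A,B,C)) (qclass G)" using h cpG by simp
    also have "\<dots> = qclass (A',B',C')" by (rule cmul_eq[OF npos discf' dc])
    finally have cp: "cpow (-4*n') h (Suc k) = qclass (A',B',C')" .
    have "Lq n' (A',B',C') = lmul (Lq n' (A,B,C)) (Lq n' G)"
      using dirichlet_lat[of n' A B C Ak' Bk' Ck' A' B' C'] npos dc discf' Ge by simp
    then have "\<forall>z\<in>Lq n' (A',B',C'). \<exists>w\<in>O1 b. z = (cnj \<mu> * (cnj \<mu>)^k) * w"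
      using lmul_incl[OF b0 Lf LG] by simp
    then have "\<forall>z\<in>Lq n' (A',B',C'). \<exists>w\<in>O1 b. z = (cnj \<mu>)^(Suc k) * w" by simp
    then show ?case using cp A'e dF' cB' unfolding \<mu>_def by blast
  qed
qed

lemma frob_main:
  fixes a b r t11 t21 z y :: int
  assumes b: "b > 0" and r: "r > 0" "odd r" and cra: "coprime r a"
    and copA: "coprime (t11^2 + b*t21^2) r"
    and muN: "(of_int t11 + of_int t21 * th b)^(nat (phiD (-4*(a^2*b)) r)) = of_int z + of_int y * th b"
  shows "r dvd y"
proof (cases "y = 0")
  case True then show ?thesis by simp
next
  case yne: False
  have b0: "b \<ge> 0" using b by simp
  define D where "D = -4*(a^2*b)"
  define \<mu> where "\<mu> = (of_int t11 + of_int t21 * th b :: complex)"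
  define N where "N = nat (phiD D r)"
  have PF: "\<And>R. R \<in> prime_factors r \<Longrightarrow> prime R \<and> R dvd r" using in_prime_factors_iff by blast
  have Rge3: "R \<ge> 3" if "prime R" "R dvd r" for R :: int
  proof -
    have "R \<ge> 2" using prime_ge_2_int that(1) by blast
    moreover have "R \<noteq> 2" using that(2) r(2) by auto
    ultimately show ?thesis by simp
  qed
  have LegV: "Legendre x R = 0 \<or> Legendre x R = 1 \<or> Legendre x R = -1" for x R
    unfolding Legendre_def by auto
  have phipos: "phiD D r > 0"
    unfolding phiD_def
  proof (rule prod_pos)
    fix R assume R: "R \<in> prime_factors r"
    then have "R \<ge> 3" using PF Rge3 by blast
    moreover have "Legendre D R \<le> 1" using LegV[of D R] by auto
    ultimately show "0 < R ^ (multiplicity R r - 1) * (R - Legendre D R)" by simp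
  qed
  have "multiplicity Q r \<le> multiplicity Q y" if Q: "prime Q" for Q :: int
  proof (cases "Q dvd r")
    case False
    then show ?thesis using not_dvd_imp_multiplicity_0[OF False] by simp
  next
    case True
    have QPF: "Q \<in> prime_factors r" using True Q r in_prime_factors_iff by auto
    define k where "k = multiplicity Q r"
    have k1: "k \<ge> 1"
    proof -
      have "Q^1 dvd r" using True by simp
      then show ?thesis unfolding k_def using multiplicity_geI r Q by (metis not_prime_unit less_irrefl)
    qed
    have Q3: "Q \<ge> 3" using Rge3 Q True by blast
    define p where "p = nat Q"
    have Qp: "Q = int p" using Q3 p_def by simp
    have pp: "prime p" using Q p_def by simp
    have p2: "p > 2" using Q3 Qp by simp
    define L where "L = Legendre D Q"
    define hh where "hh = (p - 1) div 2"
    have eul: "[L = D^hh] (mod int p)" unfolding L_def hh_def Qp using euler_criterion[OF pp p2] by blast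
    have odd: "odd p" using prime_odd_nat pp p2 by blast
    have Dp: "D^hh = (2*a)^(p-1) * (-b)^hh"
    proof -
      have "D = (2*a)^2 * (-b)" unfolding D_def by (simp add: algebra_simps power2_eq_square)
      then have "D^hh = ((2*a)^2 * (-b))^hh" by (simp only:)
      also have "\<dots> = ((2*a)^2)^hh * (-b)^hh" by (rule power_mult_distrib)
      finally have "D^hh = ((2*a)^2)^hh * (-b)^hh" .
      moreover have "((2*a)^2)^hh = (2*a)^(p-1)"
      proof -
        obtain h0 where "p = 2*h0+1" using odd by (metis oddE)
        then have "hh = h0" "p - 1 = 2*h0" unfolding hh_def by simp_all
        then show ?thesis by (simp add: power_mult)
      qed
      ultimately show ?thesis by simp
    qed
    have nd: "\<not> int p dvd 2*a"
    proof
      assume "int p dvd 2*a"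
      then have "Q dvd 2 \<or> Q dvd a" using Q Qp prime_dvd_mult_iff by metis
      moreover have "\<not> Q dvd 2" using Q3 by (auto dest: zdvd_imp_le)
      moreover have "\<not> Q dvd a" using True cra Q by (metis coprime_common_divisor not_prime_unit)
      ultimately show False by blast
    qed
    have "[(2*a)^(p-1) * (-b)^hh = 1 * (-b)^hh] (mod int p)"
      using fermat_int1[OF pp p2 nd] by (rule cong_scalar_right)
    then have "[D^hh = (-b)^hh] (mod int p)" using Dp by simp
    then have Lc: "[(-b)^((p - 1) div 2) = L] (mod int p)" using eul unfolding hh_def
      using cong_sym cong_trans by blast
    have Lv: "L = 0 \<or> L = 1 \<or> L = -1" unfolding L_def using LegV by blast
    have copQ: "coprime (t11^2 + b*t21^2) (int p)"
    proof (rule coprime_by_primes)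
      fix P assume "prime P" "P dvd t11^2 + b*t21^2" "P dvd int p"
      then have "P dvd r" using True Qp by (metis dvd_trans)
      then show False using copA \<open>prime P\<close> \<open>P dvd t11^2 + b*t21^2\<close> by (metis coprime_common_divisor not_prime_unit)
    qed
    define e where "e = nat (int p - L)"
    have m1: "\<mu>^e \<in> Zm b (int p)" unfolding \<mu>_def e_def by (rule frob_exp[OF b pp p2 Lc Lv copQ])
    have m2: "(\<mu>^e)^(p^(k-1)) \<in> Zm b (int p^(k-1+1))" by (rule lift_iter[OF b0 pp m1])
    have kk: "k - 1 + 1 = k" using k1 by simp
    define T where "T = Q^(k-1) * (Q - L)"
    have Tdvd: "T dvd phiD D r" unfolding T_def phiD_def k_def L_def
      by (rule dvd_prodI[OF _ QPF]) simp
    have Tpos: "T > 0" unfolding T_def using Q3 Lv by auto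
    obtain mm where mm: "phiD D r = T * mm" using Tdvd by blast
    have mmpos: "mm > 0" using phipos Tpos mm by (metis zero_less_mult_pos)
    have "N = nat T * nat mm" unfolding N_def mm using Tpos mmpos by (simp add: nat_mult_distrib)
    also have "nat T = e * p^(k-1)"
    proof -
      have "int p - L \<ge> 0" using Lv p2 by auto
      then have "nat T = nat (int p^(k-1)) * nat (int p - L)" unfolding T_def Qp by (simp add: nat_mult_distrib)
      also have "nat (int p^(k-1)) = p^(k-1)" by (simp add: nat_power_eq)
      finally show ?thesis unfolding e_def by simp
    qed
    finally have NN: "N = e * p^(k-1) * nat mm" .
    have "\<mu>^N = ((\<mu>^e)^(p^(k-1)))^(nat mm)" unfolding NN by (simp add: power_mult)
    also have "\<dots> \<in> Zm b (int p^k)" using Zm_pow[OF b0 m2[unfolded kk]] by blast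
    finally have "\<mu>^N \<in> Zm b (int p^k)" .
    moreover have "\<mu>^N = of_int z + of_int y * th b" using muN unfolding \<mu>_def N_def D_def .
    ultimately have "int p^k dvd y" using Zm_coeff[OF b] by blast
    then have "Q^k dvd y" using Qp by simp
    then have "k \<le> multiplicity Q y" using multiplicity_geI yne Q by (metis not_prime_unit)
    then show ?thesis unfolding k_def .
  qed
  then show ?thesis using multiplicity_le_imp_dvd[of r y] r by auto
qed

theorem lemma3p6:
  fixes a b r :: int and g h :: "qform set"
  assumes "a > 0" and "b > 1" and "squarefree b"
    and "g \<in> classgroup (-4 * (a^2 * b))"
    and "derived_from g (qclass (1, 0, b)) a"
    and "r > 0" and "odd r" and "coprime r a"
    and "h \<in> classgroup (-4 * (a^2 * b) * r^2)"
    and "derived_from h g r"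
  shows "derived_from (cpow (-4 * (a^2 * b) * r^2) h (nat (phiD (-4 * (a^2 * b)) r)))
           (qclass (1, 0, b)) (a * r)
       \<and> derived_from (cpow (-4 * (a^2 * b) * r^2) h (nat (phiD (-4 * (a^2 * b)) r)))
           (qclass (1, 0, b * r^2)) a"
proof -
  note a0 = assms(1) and b1 = assms(2) and r0 = assms(6) and rodd = assms(7) and cra = assms(8)
  have b: "b > 0" using b1 by simp
  have b0: "b \<ge> 0" using b1 by simp
  define s where "s = a*r"
  define n' where "n' = s^2*b"
  define N where "N = nat (phiD (-4 * (a^2 * b)) r)"
  have s0: "s > 0" unfolding s_def using a0 r0 by simp
  have npos: "n' > 0" unfolding n'_def using s0 b by simp
  have Dn: "-4 * (a^2 * b) * r^2 = -4*n'" unfolding n'_def s_def by (simp add: algebra_simps power2_eq_square)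
  obtain g1 where g1: "g = qclass g1" using assms(4) unfolding classgroup_def by blast
  obtain e0 \<alpha>2 \<beta>2 \<gamma>2 \<delta>2 where e0: "e0 \<in> qclass (1,0,b)" "\<alpha>2*\<delta>2 - \<beta>2*\<gamma>2 = a"
    "subst e0 \<alpha>2 \<beta>2 \<gamma>2 \<delta>2 \<in> g" using assms(5) unfolding derived_from_def by blast
  obtain g0 \<alpha>1 \<beta>1 \<gamma>1 \<delta>1 where g0: "g0 \<in> g" "\<alpha>1*\<delta>1 - \<beta>1*\<gamma>1 = r"
    "subst g0 \<alpha>1 \<beta>1 \<gamma>1 \<delta>1 \<in> h" using assms(10) unfolding derived_from_def by blast
  define e1 where "e1 = subst e0 \<alpha>2 \<beta>2 \<gamma>2 \<delta>2"
  have "qclass e1 = qclass g1" using e0(3) g1 qclass_eq unfolding e1_def by blast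
  then have "g0 \<in> qclass e1" using g0(1) g1 by simp
  then obtain m1 m2 m3 m4 where M1: "m1*m4 - m2*m3 = r" "subst g0 \<alpha>1 \<beta>1 \<gamma>1 \<delta>1 = subst e1 m1 m2 m3 m4"
    using class_chain[of g0 e1 \<alpha>1 \<delta>1 \<beta>1 \<gamma>1] g0(2) by auto
  obtain k1 k2 k3 k4 where M2: "k1*k4 - k2*k3 = a*r" "subst e1 m1 m2 m3 m4 = subst e0 k1 k2 k3 k4"
    using subst_subst_ex[of \<alpha>2 \<delta>2 \<beta>2 \<gamma>2 m1 m4 m2 m3 e0] e0(2) M1(1) unfolding e1_def by auto
  obtain l1 l2 l3 l4 where M3: "l1*l4 - l2*l3 = a*r" "subst e0 k1 k2 k3 k4 = subst (1,0,b) l1 l2 l3 l4"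
    using class_chain[OF e0(1), of k1 k4 k2 k3] M2(1) by auto
  define q0 where "q0 = subst (1,0,b) l1 l2 l3 l4"
  have q0h: "q0 \<in> h" using g0(3) M1(2) M2(2) M3(2) unfolding q0_def by simp
  obtain h1 where h1: "h = qclass h1" "primitive h1" "disc h1 = -4*n'"
    using assms(9) Dn unfolding classgroup_def by auto
  obtain c1 c2 c3 where h1e: "h1 = (c1,c2,c3)" by (cases h1)
  have prim: "gcd c1 (gcd c2 c3) = 1" using h1(2) h1e unfolding primitive_def by simp
  have Dne: "-4*n' \<noteq> 0" using npos by simp
  obtain u1 u2 u3 u4 where U: "u1*u4 - u2*u3 = 1" "coprime (fst (subst (c1,c2,c3) u1 u2 u3 u4)) (-4*n')"
    using rep_coprime_subst[OF prim Dne] by blast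
  define f where "f = subst h1 u1 u2 u3 u4"
  have fh1: "f \<in> qclass h1" unfolding f_def using subst_mem[OF U(1)] .
  have "qclass q0 = qclass h1" using q0h h1(1) qclass_eq by blast
  then have "f \<in> qclass q0" using fh1 by simp
  then obtain w1 w2 w3 w4 where W: "w1*w4 - w2*w3 = 1" "f = subst q0 w1 w2 w3 w4"
    unfolding qclass_def by blast
  obtain t11 t12 t21 t22 where T: "t11*t22 - t12*t21 = s" "f = subst (1,0,b) t11 t12 t21 t22"
    using subst_subst_ex[of l1 l4 l2 l3 w1 w4 w2 w3 "(1,0,b)"] W M3(1) unfolding q0_def s_def by auto
  define A where "A = t11^2 + b*t21^2"
  define B where "B = 2*t11*t12 + 2*b*t21*t22"
  define C where "C = t12^2 + b*t22^2"
  have fe: "f = (A,B,C)" using T(2) unfolding A_def B_def C_def by (simp add: subst_10b)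
  have fe': "(A,B,C) = subst (1,0,b) t11 t12 t21 t22" using T(2) fe by simp
  have copAD: "coprime A (-4*n')" using U(2) fe h1e f_def by simp
  have hf: "h = qclass (A,B,C)" using h1(1) qclass_eq[OF fh1] fe by simp
  have discf: "B^2 - 4*A*C = -4*n'"
    unfolding A_def B_def C_def n'_def T(1)[symmetric] by (simp add: algebra_simps power2_eq_square)
  have A0: "A \<ge> 0" unfolding A_def using b0 by simp
  have Apos: "A > 0"
  proof (rule ccontr)
    assume "\<not> A > 0" then have "A = 0" using A0 by simp
    then have "coprime 0 (-4*n')" using copAD by simp
    then have "is_unit (-4*n')" by simp
    then show False using npos by simp
  qed
  have copAB: "coprime A B"
  proof (rule coprime_by_primes)
    fix p assume p: "prime p" "p dvd A" "p dvd B"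
    then have "p dvd B^2 - 4*A*C" by (intro dvd_diff) (simp_all add: power2_eq_square)
    then have "p dvd -4*n'" using discf by simp
    then show False using copAD p by (metis coprime_common_divisor not_prime_unit)
  qed
  have copAr: "coprime A r"
  proof (rule coprime_by_primes)
    fix p assume p: "prime p" "p dvd A" "p dvd r"
    then have "p dvd -4*n'" unfolding n'_def s_def by (simp add: power2_eq_square)
    then show False using copAD p by (metis coprime_common_divisor not_prime_unit)
  qed
  obtain AN BN CN where PF: "cpow (-4*n') h N = qclass (AN,BN,CN)" "AN = A^N" "BN^2 - 4*AN*CN = -4*n'"
    "\<forall>z\<in>Lq n' (AN,BN,CN). \<exists>w\<in>O1 b. z = (cnj (of_int t11 + of_int t21 * th b))^N * w"
    using power_forms[OF b s0 n'_def fe' T(1) Apos copAB hf, of N] by blast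
  define \<mu> where "\<mu> = (of_int t11 + of_int t21 * th b :: complex)"
  have "\<mu>^N \<in> O1 b" unfolding \<mu>_def by (intro O1_pow b0 O1I)
  then obtain z y where zy: "\<mu>^N = of_int z + of_int y * th b" unfolding O1_def by blast
  have czy: "(cnj \<mu>)^N = of_int z - of_int y * th b"
  proof -
    have "(cnj \<mu>)^N = cnj (\<mu>^N)" by simp
    then show ?thesis unfolding zy by simp
  qed
  obtain EN where EN: "BN = 2*EN" using disc_even[of AN BN CN n'] PF(3) by (auto simp: disc_def)
  have thn: "th n' = of_int s * th b" using th_scale[of s b] s0 b0 n'_def by simp
  have "of_int EN + th n' \<in> Lq n' (AN,BN,CN)" unfolding Lq_def EN using lat_mem2 by simp
  then obtain w where w: "w \<in> O1 b" "of_int EN + th n' = (cnj \<mu>)^N * w" using PF(4) unfolding \<mu>_def by blast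
  obtain p q where pq: "w = of_int p + of_int q * th b" using w(1) unfolding O1_def by blast
  have "(cnj \<mu>)^N * w = of_int (z*p + b*y*q) + of_int (z*q - y*p) * th b"
    unfolding czy pq using th_sq[OF b0] by (simp add: algebra_simps power2_eq_square)
  then have "of_int EN + of_int s * th b = of_int (z*p + b*y*q) + of_int (z*q - y*p) * th b"
    using w(2) thn by simp
  then have ENe: "EN = z*p + b*y*q" and se: "s = z*q - y*p" using coeff_unique[OF b] by blast+
  have "\<mu> * cnj \<mu> = of_int A" unfolding \<mu>_def A_def using th_sq[OF b0] by (simp add: algebra_simps power2_eq_square)
  then have "of_int (A^N) = (\<mu> * cnj \<mu>)^N" by simp
  also have "\<dots> = \<mu>^N * (cnj \<mu>)^N" by (simp add: power_mult_distrib)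
  also have "\<dots> = of_int (z^2 + b*y^2)" unfolding zy czy using th_sq[OF b0] by (simp add: algebra_simps power2_eq_square)
  finally have ANe: "AN = z^2 + b*y^2" using PF(2) by (metis of_int_eq_iff)
  have ANpos: "AN > 0" using PF(2) Apos by simp
  have "AN * CN = AN * (p^2 + b*q^2)"
  proof -
    have "(2*EN)^2 - 4*AN*CN = -4*(s^2*b)" using PF(3) EN n'_def by simp
    moreover have "(2*(z*p + b*y*q))^2 - 4*(z^2 + b*y^2)*(p^2 + b*q^2) = -4*((z*q - y*p)^2*b)"
      by (simp add: algebra_simps power2_eq_square)
    ultimately show ?thesis using ENe se ANe by (simp add: algebra_simps)
  qed
  then have CNe: "CN = p^2 + b*q^2" using ANpos by simp
  have FN: "(AN,BN,CN) = subst (1,0,b) z p y q" unfolding subst_10b using ANe EN ENe CNe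
    by (simp add: algebra_simps)
  have lN: "cpow (-4 * (a^2 * b) * r^2) h N = qclass (AN,BN,CN)" using PF(1) Dn by (simp only:)
  have claim1: "derived_from (cpow (-4 * (a^2 * b) * r^2) h N) (qclass (1, 0, b)) (a * r)"
  proof -
    have d: "z*q - p*y = a*r" using se s_def by (simp add: mult.commute)
    have m: "subst (1,0,b) z p y q \<in> qclass (AN,BN,CN)" using qclass_refl[of "(AN,BN,CN)"] FN by simp
    show ?thesis unfolding derived_from_def lN using qclass_refl[of "(1,0,b)"] d m by blast
  qed
  have "r dvd y"
    using frob_main[OF b r0 rodd cra, of t11 t21 z y] copAr zy unfolding A_def \<mu>_def N_def by blast
  then obtain y' where y': "y = r*y'" by blast
  have "z*q = r*(a + y'*p)" using se y' unfolding s_def by (simp add: algebra_simps)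
  then have "r dvd z*q" by simp
  moreover have "coprime z r"
  proof (rule coprime_by_primes)
    fix P assume P: "prime P" "P dvd z" "P dvd r"
    then have "P dvd z^2 + b*y^2" using y' by (simp add: power2_eq_square)
    then have "P dvd A^N" using ANe PF(2) by simp
    then have "P dvd A" using P(1) prime_dvd_power by blast
    then show False using copAr P by (metis coprime_common_divisor not_prime_unit)
  qed
  ultimately have "r dvd q" using coprime_dvd_mult_right_iff[of r z q] by (simp add: coprime_commute)
  then obtain q' where q': "q = r*q'" by blast
  have "r * (z*q' - y'*p) = r * a" using se y' q' unfolding s_def by (simp add: algebra_simps)
  then have det2: "z*q' - p*y' = a" using r0 by (simp add: mult.commute)
  have FN2: "(AN,BN,CN) = subst (1,0,b*r^2) z p y' q'" unfolding subst_10b using FN y' q'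
    by (simp add: subst_10b algebra_simps power2_eq_square)
  have claim2: "derived_from (cpow (-4 * (a^2 * b) * r^2) h N) (qclass (1, 0, b*r^2)) a"
  proof -
    have m: "subst (1,0,b*r^2) z p y' q' \<in> qclass (AN,BN,CN)" using qclass_refl[of "(AN,BN,CN)"] FN2 by simp
    show ?thesis unfolding derived_from_def lN using qclass_refl[of "(1,0,b*r^2)"] det2 m by blast
  qed
  show ?thesis using claim1 claim2 unfolding N_def by (rule conjI)
qed

end
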